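(* Let $(X,\mathcal{R})$ be a partially metric association scheme with rank $d+1\geq 3$, partially metric with respect to the connected relation $R_1$, and suppose the scheme graph $\Gamma$ of $R_1$ has valency $k\geq 3$. Let $a_1=p^1_{11}$ and $b_1=p^1_{12}=k-1-a_1$. Let $E$ be a minimal scheme idempotent with multiplicity $m$ for corresponding eigenvalue $\theta\neq\pm k$. Then $$m\geq k-\frac{k(\theta+1)^2a_1(a_1+1)}{((a_1+1)\theta+k)^2+ka_1b_1},$$ with equality if and only if $E$ is a light tail.
   Context: A (symmetric) association scheme with rank $d+1$ on a finite set $X$ ($|X|=n$) is a partition $\mathcal{R}=\{R_0,\dots,R_d\}$ of $X\times X$ with $R_0$ the diagonal, each $R_i$ symmetric, and numbers $p^h_{ij}$ such that for every $(x,y)\in R_h$ the number of $z$ with $(x,z)\in R_i$, $(z,y)\in R_j$ equals $p^h_{ij}$. The scheme graph of $R_i$ ($i>0$) is the graph on $X$ with $x\sim y$ iff $(x,y)\in R_i$; its relation matrix is $A_i$ ($A_0=I$). The Bose–Mesner algebra (span of the $A_i$) has a basis of primitive (minimal scheme) idempotents $E_0=\frac1nJ,E_1,\dots,E_d$; the multiplicity of $E_j$ is its rank. If $A_1E_j=\theta_jE_j$, $\theta_j$ is the corresponding eigenvalue on $E_j$. Krein parameters $q^h_{ij}$ are defined by $E_i\circ E_j=\frac1n\sum_h q^h_{ij}E_h$ ($\circ$ = entrywise product). The scheme is $t$-partially metric with respect to a connected relation $R_1$ if, after reordering, $R_i$ is exactly the distance-$i$ relation of the scheme graph of $R_1$ for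 $i=1,\dots,t$; it is called partially metric if it is $2$-partially metric (or has rank 2). A minimal scheme idempotent $E=E_j$ is a light tail if the matrix $F=\sum_{h\neq 0}q^h_{jj}E_h$ is nonzero and $A_1F=\eta F$ for some real $\eta$. *)

theory Defs
  imports "HOL-Analysis.Analysis"
begin

text \<open>The ground set X is a finite type 'x (X = UNIV). A scheme of rank d+1 is a
  family R :: nat => ('x * 'x) set with classes R 0, ..., R d.\<close>

definition assoc_scheme :: "nat \<Rightarrow> (nat \<Rightarrow> ('x::finite \<times> 'x) set) \<Rightarrow> bool" where
  "assoc_scheme d R \<longleftrightarrow>
     (\<forall>i\<le>d. R i \<noteq> {}) \<and>
     (\<forall>i\<le>d. \<forall>j\<le>d. i \<noteq> j \<longrightarrow> R i \<inter> R j = {}) \<and>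
     (\<Union>i\<in>{0..d}. R i) = UNIV \<and>
     R 0 = Id \<and>
     (\<forall>i\<le>d. sym (R i)) \<and>
     (\<forall>h\<le>d. \<forall>i\<le>d. \<forall>j\<le>d. \<exists>p::nat. \<forall>(x,y)\<in>R h.
        card {z. (x,z) \<in> R i \<and> (z,y) \<in> R j} = p)"

definition intnum :: "(nat \<Rightarrow> ('x::finite \<times> 'x) set) \<Rightarrow> nat \<Rightarrow> nat \<Rightarrow> nat \<Rightarrow> nat" where
  "intnum R h i j = (SOME p. \<forall>(x,y)\<in>R h. card {z. (x,z) \<in> R i \<and> (z,y) \<in> R j} = p)"

definition graph_dist_is :: "('x \<times> 'x) set \<Rightarrow> nat \<Rightarrow> 'x \<Rightarrow> 'x \<Rightarrow> bool" where
  "graph_dist_is G i x y \<longleftrightarrow> (x,y) \<in> G ^^ i \<and> (\<forall>j<i. (x,y) \<notin> G ^^ j)"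

definition connected_rel :: "('x \<times> 'x) set \<Rightarrow> bool" where
  "connected_rel G \<longleftrightarrow> (\<forall>x y. (x,y) \<in> G\<^sup>*)"

text \<open>t-partially metric with respect to R 1 (with the labelling fixed so that
  R i is the distance-i relation for i = 1..t).\<close>
definition t_partially_metric :: "nat \<Rightarrow> (nat \<Rightarrow> ('x \<times> 'x) set) \<Rightarrow> bool" where
  "t_partially_metric t R \<longleftrightarrow> connected_rel (R 1) \<and>
     (\<forall>i\<in>{1..t}. R i = {(x,y). graph_dist_is (R 1) i x y})"

definition rel_mat :: "(nat \<Rightarrow> ('x::finite \<times> 'x) set) \<Rightarrow> nat \<Rightarrow> real^'x^'x" where
  "rel_mat R i = (\<chi> x y. if (x,y) \<in> R i then 1 else 0)"

definition Jmat :: "real^'x::finite^'x" where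
  "Jmat = (\<chi> x y. 1)"

definition hadamard :: "real^'x::finite^'x \<Rightarrow> real^'x^'x \<Rightarrow> real^'x^'x" where
  "hadamard A B = (\<chi> x y. A $ x $ y * B $ x $ y)"

definition bose_mesner :: "nat \<Rightarrow> (nat \<Rightarrow> ('x::finite \<times> 'x) set) \<Rightarrow> (real^'x^'x) set" where
  "bose_mesner d R = span (rel_mat R ` {0..d})"

definition prim_idem :: "nat \<Rightarrow> (nat \<Rightarrow> ('x::finite \<times> 'x) set) \<Rightarrow> real^'x^'x \<Rightarrow> bool" where
  "prim_idem d R E \<longleftrightarrow> E \<in> bose_mesner d R \<and> E ** E = E \<and> E \<noteq> 0 \<and>
     (\<forall>F\<in>bose_mesner d R. F ** F = F \<and> F ** E = F \<longrightarrow> F = 0 \<or> F = E)"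

text \<open>Krein parameters: the coefficients q with
  E_i o E_j = (1/n) * sum_h q^h_ij E_h, indexing the primitive idempotents by themselves.\<close>
definition krein_expansion :: "nat \<Rightarrow> (nat \<Rightarrow> ('x::finite \<times> 'x) set) \<Rightarrow> real^'x^'x \<Rightarrow> real^'x^'x
    \<Rightarrow> (real^'x^'x \<Rightarrow> real) \<Rightarrow> bool" where
  "krein_expansion d R Ei Ej q \<longleftrightarrow>
     hadamard Ei Ej = (1 / real CARD('x)) *\<^sub>R (\<Sum>H\<in>{H. prim_idem d R H}. q H *\<^sub>R H)"

definition light_tail :: "nat \<Rightarrow> (nat \<Rightarrow> ('x::finite \<times> 'x) set) \<Rightarrow> real^'x^'x \<Rightarrow> bool" where
  "light_tail d R E \<longleftrightarrow> prim_idem d R E \<and>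
     (\<exists>q. krein_expansion d R E E q \<and>
        (let F = (\<Sum>H\<in>{H. prim_idem d R H} - {(1 / real CARD('x)) *\<^sub>R Jmat}. q H *\<^sub>R H)
         in F \<noteq> 0 \<and> (\<exists>eta::real. rel_mat R 1 ** F = eta *\<^sub>R F)))"

end

theory Submission
  imports Defs
begin

locale pms =
  fixes d :: nat and R :: "nat \<Rightarrow> ('x::finite \<times> 'x) set"
  assumes sch: "assoc_scheme d R" and d2: "d \<ge> 2" and pm: "t_partially_metric 2 R"
begin

lemma sch_all: "(\<forall>i\<le>d. R i \<noteq> {}) \<and> (\<forall>i\<le>d. \<forall>j\<le>d. i \<noteq> j \<longrightarrow> R i \<inter> R j = {}) \<and>
  (\<Union>i\<in>{0..d}. R i) = UNIV \<and> R 0 = Id \<and> (\<forall>i\<le>d. sym (R i)) \<and>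
  (\<forall>h\<le>d. \<forall>i\<le>d. \<forall>j\<le>d. \<exists>p::nat. \<forall>(x,y)\<in>R h.
        card {z. (x,z) \<in> R i \<and> (z,y) \<in> R j} = p)"
  using sch unfolding assoc_scheme_def .

lemmas sch_parts = sch_all[THEN conjunct1] sch_all[THEN conjunct2, THEN conjunct1]
  sch_all[THEN conjunct2, THEN conjunct2, THEN conjunct1]
  sch_all[THEN conjunct2, THEN conjunct2, THEN conjunct2, THEN conjunct1]
  sch_all[THEN conjunct2, THEN conjunct2, THEN conjunct2, THEN conjunct2, THEN conjunct1]
  sch_all[THEN conjunct2, THEN conjunct2, THEN conjunct2, THEN conjunct2, THEN conjunct2]

lemma R_nonempty: "i \<le> d \<Longrightarrow> R i \<noteq> {}"
  using sch_parts(1) by simp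

lemma R_disj: "i \<le> d \<Longrightarrow> j \<le> d \<Longrightarrow> (x,y) \<in> R i \<Longrightarrow> (x,y) \<in> R j \<Longrightarrow> i = j"
  using sch_parts(2) by blast

lemma R_cover: "\<exists>i\<le>d. (x,y) \<in> R i"
proof -
  have "(x,y) \<in> (\<Union>i\<in>{0..d}. R i)" using sch_parts(3) by simp
  then show ?thesis by auto
qed

lemma R0: "R 0 = Id"
  using sch_parts(4) .

lemma R_sym: "i \<le> d \<Longrightarrow> (x,y) \<in> R i \<Longrightarrow> (y,x) \<in> R i"
  using sch_parts(5) unfolding sym_def by blast

lemma intnum: 
  assumes "h \<le> d" "i \<le> d" "j \<le> d" "(x,y) \<in> R h"
  shows "card {z. (x,z) \<in> R i \<and> (z,y) \<in> R j} = intnum R h i j"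
proof -
  from sch_parts(6) assms(1-3) obtain p where p: "\<forall>(x,y)\<in>R h. card {z. (x,z) \<in> R i \<and> (z,y) \<in> R j} = p"
    by blast
  then have "\<forall>(x,y)\<in>R h. card {z. (x,z) \<in> R i \<and> (z,y) \<in> R j} = intnum R h i j"
    unfolding intnum_def by (rule someI)
  with assms(4) show ?thesis by blast
qed

lemma pm_all: "\<forall>i\<in>{1..2::nat}. R i = {(x,y). graph_dist_is (R 1) i x y}"
  using pm unfolding t_partially_metric_def by (elim conjE)

lemma R2_dist: "R 2 = {(x,y). graph_dist_is (R 1) 2 x y}"
  by (rule pm_all[rule_format]) simp

lemma R1_irrefl: "(x,y) \<in> R 1 \<Longrightarrow> x \<noteq> y"
  using R_disj[of 0 1 x y] d2 R0 by auto

lemma R2_char: "(x,y) \<in> R 2 \<longleftrightarrow> (x,y) \<in> R 1 O R 1 \<and> x \<noteq> y \<and> (x,y) \<notin> R 1"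
proof -
  have e: "\<And>G::('x\<times>'x) set. G^^2 = G O G" by (simp add: numeral_2_eq_2)
  have 1: "(x,y) \<in> R 2 \<longleftrightarrow> (x,y) \<in> R 1 O R 1 \<and> (\<forall>j<2. (x,y) \<notin> (R 1)^^j)"
    by (subst R2_dist) (simp only: graph_dist_is_def e mem_Collect_eq prod.case)
  have 2: "(\<forall>j<2. (x,y) \<notin> (R 1)^^j) \<longleftrightarrow> x \<noteq> y \<and> (x,y) \<notin> R 1"
    by (auto simp: less_2_cases_iff)
  show ?thesis using 1 2 by blast
qed

lemma dist2: "(x,z) \<in> R 1 \<Longrightarrow> (z,y) \<in> R 1 \<Longrightarrow> x = y \<or> (x,y) \<in> R 1 \<or> (x,y) \<in> R 2"
  using R2_char by blast

definition cls :: "'x \<Rightarrow> 'x \<Rightarrow> nat" where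
  "cls x y = (THE i. i \<le> d \<and> (x,y) \<in> R i)"

lemma cls: "cls x y \<le> d" "(x,y) \<in> R (cls x y)"
proof -
  obtain i where i: "i \<le> d" "(x,y) \<in> R i" using R_cover by blast
  have "cls x y = i" unfolding cls_def
    by (rule the_equality) (use i R_disj in auto)
  then show "cls x y \<le> d" "(x,y) \<in> R (cls x y)" using i by auto
qed

lemma cls_eq: "i \<le> d \<Longrightarrow> (x,y) \<in> R i \<longleftrightarrow> cls x y = i"
  using cls R_disj by metis

lemma cls_sym: "cls y x = cls x y"
  using cls R_sym cls_eq by metis

lemma cls_0: "cls x y = 0 \<longleftrightarrow> x = y"
  using cls_eq[of 0] R0 by auto

definition cc :: "real^'x^'x \<Rightarrow> bool" where
  "cc M \<longleftrightarrow> (\<forall>x y x' y'. cls x y = cls x' y' \<longrightarrow> M$x$y = M$x'$y')"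

lemma ccI: "(\<And>x y x' y'. cls x y = cls x' y' \<Longrightarrow> M$x$y = M$x'$y') \<Longrightarrow> cc M"
  unfolding cc_def by blast

lemma ccD: "cc M \<Longrightarrow> cls x y = cls x' y' \<Longrightarrow> M$x$y = M$x'$y'"
  unfolding cc_def by blast

definition rep :: "nat \<Rightarrow> 'x \<times> 'x" where "rep i = (SOME p. p \<in> R i)"

definition val :: "real^'x^'x \<Rightarrow> nat \<Rightarrow> real" where
  "val M i = M $ fst (rep i) $ snd (rep i)"

lemma rep: "i \<le> d \<Longrightarrow> rep i \<in> R i"
  unfolding rep_def using R_nonempty by (simp add: some_in_eq)

lemma cc_val: "cc M \<Longrightarrow> M$x$y = val M (cls x y)"
proof -
  assume "cc M"
  have "rep (cls x y) \<in> R (cls x y)" using rep cls by blast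
  then have "cls (fst (rep (cls x y))) (snd (rep (cls x y))) = cls x y"
    using cls_eq cls by (metis prod.collapse)
  then show ?thesis using \<open>cc M\<close> unfolding cc_def val_def by metis
qed

lemma rel_mat_nth: "rel_mat R i $ x $ y = (if (x,y) \<in> R i then 1 else 0)"
  by (simp add: rel_mat_def)

lemma cc_expand: 
  assumes "cc M" shows "M = (\<Sum>i\<in>{0..d}. val M i *\<^sub>R rel_mat R i)"
proof -
  have "M $ x $ y = (\<Sum>i\<in>{0..d}. val M i *\<^sub>R rel_mat R i) $ x $ y" for x y
  proof -
    have "(\<Sum>i\<in>{0..d}. val M i *\<^sub>R rel_mat R i) $ x $ y
        = (\<Sum>i\<in>{0..d}. val M i * (if (x,y) \<in> R i then 1 else 0))"
      by (simp add: rel_mat_nth)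
    also have "\<dots> = (\<Sum>i\<in>{0..d}. (if cls x y = i then val M i else 0))"
      by (intro sum.cong refl) (simp add: cls_eq)
    also have "\<dots> = val M (cls x y)" using cls(1) by (simp add: sum.delta)
    finally show ?thesis using cc_val[OF assms] by simp
  qed
  then show ?thesis by (simp add: vec_eq_iff)
qed

lemma cc_rel_mat: assumes "i \<le> d" shows "cc (rel_mat R i)"
proof -
  { fix x y x' y' assume "cls x y = cls x' y'"
    then have "((x,y) \<in> R i) = ((x',y') \<in> R i)" using cls_eq[OF assms] by simp
    then have "rel_mat R i $x$y = rel_mat R i $x'$y'" unfolding rel_mat_nth by simp }
  then show ?thesis unfolding cc_def by blast
qed

lemma cc_add: assumes "cc M" "cc N" shows "cc (M + N)"
proof (rule ccI)
  fix x y x' y' assume h: "cls x y = cls x' y'"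
  show "(M + N)$x$y = (M + N)$x'$y'" using ccD[OF assms(1) h] ccD[OF assms(2) h] by simp
qed

lemma cc_diff: assumes "cc M" "cc N" shows "cc (M - N)"
proof (rule ccI)
  fix x y x' y' assume h: "cls x y = cls x' y'"
  show "(M - N)$x$y = (M - N)$x'$y'" using ccD[OF assms(1) h] ccD[OF assms(2) h] by simp
qed

lemma cc_scale: assumes "cc M" shows "cc (c *\<^sub>R M)"
proof (rule ccI)
  fix x y x' y' assume h: "cls x y = cls x' y'"
  show "(c *\<^sub>R M)$x$y = (c *\<^sub>R M)$x'$y'" using ccD[OF assms(1) h] by simp
qed

lemma cc_zero: "cc 0"
  by (rule ccI) simp

lemma subspace_cc: "subspace {M. cc M}"
  unfolding subspace_def using cc_add cc_scale cc_zero by (simp add: scaleR_conv_of_real)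

lemma BM_eq: "bose_mesner d R = {M. cc M}"
proof
  show "bose_mesner d R \<subseteq> {M. cc M}"
    unfolding bose_mesner_def
    by (rule span_minimal) (use subspace_cc cc_rel_mat in auto)
  show "{M. cc M} \<subseteq> bose_mesner d R"
  proof
    fix M assume "M \<in> {M. cc M}"
    then have "M = (\<Sum>i\<in>{0..d}. val M i *\<^sub>R rel_mat R i)" using cc_expand by auto
    also have "\<dots> \<in> bose_mesner d R" unfolding bose_mesner_def
      by (intro span_sum span_mul span_base) auto
    finally show "M \<in> bose_mesner d R" .
  qed
qed

lemma cc_sym: "cc M \<Longrightarrow> M$y$x = M$x$y"
  unfolding cc_def using cls_sym by metis

lemma cc_transpose: "cc M \<Longrightarrow> transpose M = M"
  by (simp add: transpose_def vec_eq_iff cc_sym)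

lemma cc_hadamard: assumes "cc M" "cc N" shows "cc (hadamard M N)"
proof -
  { fix x y x' y' assume "cls x y = cls x' y'"
    then have "M$x$y = M$x'$y'" "N$x$y = N$x'$y'" using assms unfolding cc_def by blast+
    then have "hadamard M N $x$y = hadamard M N $x'$y'" unfolding hadamard_def by simp }
  then show ?thesis unfolding cc_def by blast
qed

lemma mat1_nth: "(mat 1 :: real^'x^'x) $ x $ y = (if x = y then 1 else 0)"
  by (simp add: mat_def)

lemma cc_mat1: "cc (mat 1)"
proof -
  { fix x y x' y' assume "cls x y = cls x' y'"
    then have "(x = y) = (x' = y')" using cls_0 by metis
    then have "(mat 1 :: real^'x^'x) $x$y = mat 1 $x'$y'" unfolding mat1_nth by simp }
  then show ?thesis unfolding cc_def by blast
qed

lemma cc_J: "cc Jmat"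
  unfolding cc_def Jmat_def by simp

lemma sum_classes:
  fixes g :: "nat \<Rightarrow> nat \<Rightarrow> real"
  shows   "(\<Sum>z\<in>UNIV. g (cls x z) (cls z y)) =
   (\<Sum>i\<in>{0..d}. \<Sum>j\<in>{0..d}. g i j * real (card {z. (x,z) \<in> R i \<and> (z,y) \<in> R j}))"
proof -
  have "(\<Sum>i\<in>{0..d}. \<Sum>j\<in>{0..d}. g i j * real (card {z. (x,z) \<in> R i \<and> (z,y) \<in> R j}))
     = (\<Sum>i\<in>{0..d}. \<Sum>j\<in>{0..d}. \<Sum>z\<in>UNIV. (if cls x z = i \<and> cls z y = j then g i j else 0))"
  proof (intro sum.cong refl)
    fix i j assume "i \<in> {0..d}" "j \<in> {0..d}"
    then have "{z. (x,z) \<in> R i \<and> (z,y) \<in> R j} = {z. cls x z = i \<and> cls z y = j}"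
      using cls_eq by auto
    then show "g i j * real (card {z. (x,z) \<in> R i \<and> (z,y) \<in> R j}) =
        (\<Sum>z\<in>UNIV. (if cls x z = i \<and> cls z y = j then g i j else 0))"
      by (simp add: sum.If_cases)
  qed
  also have "\<dots> = (\<Sum>z\<in>UNIV. \<Sum>i\<in>{0..d}. \<Sum>j\<in>{0..d}. (if cls x z = i \<and> cls z y = j then g i j else 0))"
  proof -
    have "\<And>i. (\<Sum>j\<in>{0..d}. \<Sum>z\<in>UNIV. (if cls x z = i \<and> cls z y = j then g i j else 0))
       = (\<Sum>z\<in>UNIV. \<Sum>j\<in>{0..d}. (if cls x z = i \<and> cls z y = j then g i j else 0))"
      by (rule sum.swap)
    then have "(\<Sum>i\<in>{0..d}. \<Sum>j\<in>{0..d}. \<Sum>z\<in>UNIV. (if cls x z = i \<and> cls z y = j then g i j else 0))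
       = (\<Sum>i\<in>{0..d}. \<Sum>z\<in>UNIV. \<Sum>j\<in>{0..d}. (if cls x z = i \<and> cls z y = j then g i j else 0))"
      by simp
    also have "\<dots> = (\<Sum>z\<in>UNIV. \<Sum>i\<in>{0..d}. \<Sum>j\<in>{0..d}. (if cls x z = i \<and> cls z y = j then g i j else 0))"
      by (rule sum.swap)
    finally show ?thesis .
  qed
  also have "\<dots> = (\<Sum>z\<in>UNIV. g (cls x z) (cls z y))"
  proof (intro sum.cong refl)
    fix z
    have "(\<Sum>i\<in>{0..d}. \<Sum>j\<in>{0..d}. (if cls x z = i \<and> cls z y = j then g i j else 0))
        = (\<Sum>i\<in>{0..d}. if cls x z = i then g i (cls z y) else 0)"
      by (intro sum.cong refl) (use cls(1) in \<open>auto simp: sum.delta'\<close>)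
    also have "\<dots> = g (cls x z) (cls z y)" using cls(1) by (simp add: sum.delta')
    finally show "(\<Sum>i\<in>{0..d}. \<Sum>j\<in>{0..d}. (if cls x z = i \<and> cls z y = j then g i j else 0))
        = g (cls x z) (cls z y)" .
  qed
  finally show ?thesis by simp
qed

lemma cc_mult: assumes "cc M" "cc N" shows "cc (M ** N)"
proof -
  have "(M ** N)$x$y = (\<Sum>i\<in>{0..d}. \<Sum>j\<in>{0..d}. val M i * val N j * intnum R (cls x y) i j)" for x y
  proof -
    have "(M ** N)$x$y = (\<Sum>z\<in>UNIV. val M (cls x z) * val N (cls z y))"
      by (simp add: matrix_matrix_mult_def cc_val assms)
    also have "\<dots> = (\<Sum>i\<in>{0..d}. \<Sum>j\<in>{0..d}. val M i * val N j * card {z. (x,z) \<in> R i \<and> (z,y) \<in> R j})"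
      by (rule sum_classes)
    also have "\<dots> = (\<Sum>i\<in>{0..d}. \<Sum>j\<in>{0..d}. val M i * val N j * intnum R (cls x y) i j)"
      by (intro sum.cong refl) (simp add: intnum cls)
    finally show ?thesis .
  qed
  then show ?thesis unfolding cc_def by simp
qed

lemma cc_commute: assumes "cc M" "cc N" shows "M ** N = N ** M"
proof -
  have "M ** N = transpose (M ** N)" using cc_transpose[OF cc_mult[OF assms]] by simp
  also have "\<dots> = transpose N ** transpose M" by (rule matrix_transpose_mul)
  also have "\<dots> = N ** M" using assms cc_transpose by simp
  finally show ?thesis .
qed

end

lemma mm_diff_left: "(A - B) ** C = A ** C - B ** (C::real^'n^'n)"
  by (simp add: matrix_matrix_mult_def vec_eq_iff sum_subtractf left_diff_distrib)

lemma mm_diff_right: "C ** (A - B) = C ** A - C ** (B::real^'n^'n)"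
  by (simp add: matrix_matrix_mult_def vec_eq_iff sum_subtractf right_diff_distrib)

lemma mm_add_left: "(A + B) ** C = A ** C + B ** (C::real^'n^'n)"
  by (simp add: matrix_matrix_mult_def vec_eq_iff sum.distrib distrib_right)

lemma mm_scale_left: "(c *\<^sub>R A) ** B = c *\<^sub>R (A ** (B::real^'n^'n))"
  by (simp add: scalar_matrix_assoc)

lemma mm_scale_right: "A ** (c *\<^sub>R B) = c *\<^sub>R (A ** (B::real^'n^'n))"
  by (simp add: matrix_scalar_ac scalar_matrix_assoc)

lemma mm_sum_left: "(\<Sum>w\<in>t. f w) ** (v::real^'n^'n) = (\<Sum>w\<in>t. f w ** v)"
proof -
  have "(\<Sum>k\<in>UNIV. (\<Sum>w\<in>t. f w $ i $ k) * v $ k $ j) = (\<Sum>w\<in>t. \<Sum>k\<in>UNIV. f w $ i $ k * v $ k $ j)" for i j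
  proof -
    have "(\<Sum>k\<in>UNIV. (\<Sum>w\<in>t. f w $ i $ k) * v $ k $ j) = (\<Sum>k\<in>UNIV. \<Sum>w\<in>t. f w $ i $ k * v $ k $ j)"
      by (simp add: sum_distrib_right)
    also have "\<dots> = (\<Sum>w\<in>t. \<Sum>k\<in>UNIV. f w $ i $ k * v $ k $ j)" by (rule sum.swap)
    finally show ?thesis .
  qed
  then show ?thesis by (simp add: matrix_matrix_mult_def vec_eq_iff)
qed

lemma mm_zero_left [simp]: "0 ** (A::real^'n^'n) = 0"
  by (simp add: matrix_matrix_mult_def vec_eq_iff)

lemma mm_zero_right [simp]: "(A::real^'n^'n) ** 0 = 0"
  by (simp add: matrix_matrix_mult_def vec_eq_iff)

lemma linear_mm_left: "linear (\<lambda>X::real^'n^'n. N ** X)"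
  by (rule linearI) (simp_all add: matrix_add_ldistrib mm_scale_right)

lemma sym_inner: "transpose Y = Y \<Longrightarrow> (Y *v a) \<bullet> b = a \<bullet> ((Y::real^'n^'n) *v b)"
  by (metis dot_lmul_matrix vector_transpose_matrix)

context pms begin

lemma cc_reduced: assumes "cc Z" "Z ** Z = 0" shows "Z = 0"
proof -
  have "Z $ x $ y = 0" for x y
  proof -
    have "(Z ** Z) $ x $ x = (\<Sum>z\<in>UNIV. (Z$x$z)^2)"
      by (simp add: matrix_matrix_mult_def power2_eq_square cc_sym[OF assms(1), of x])
    then have "(\<Sum>z\<in>UNIV. (Z$x$z)^2) = 0" using assms(2) by simp
    then have "\<forall>z\<in>UNIV. (Z$x$z)^2 = 0" by (subst (asm) sum_nonneg_eq_0_iff) auto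
    then show ?thesis by simp
  qed
  then show ?thesis by (simp add: vec_eq_iff)
qed

definition primc :: "real^'x^'x \<Rightarrow> bool" where
  "primc E \<longleftrightarrow> cc E \<and> E ** E = E \<and> E \<noteq> 0 \<and>
     (\<forall>F. cc F \<and> F ** F = F \<and> F ** E = F \<longrightarrow> F = 0 \<or> F = E)"

lemma prim_idem_iff: "prim_idem d R E \<longleftrightarrow> primc E"
  unfolding prim_idem_def primc_def BM_eq by auto

lemma eigvec:
  assumes G: "cc G" "G ** G = G" "G \<noteq> 0" and Y: "cc Y" "Y ** G = Y"
  shows "\<exists>l v. G *v v = v \<and> v \<noteq> 0 \<and> Y *v v = l *\<^sub>R v"
proof -
  define S where "S = {v. G *v v = v} \<inter> sphere (0::real^'x) 1"
  have YT: "transpose Y = Y" using Y cc_transpose by blast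
  have GY: "G ** Y = Y" using cc_commute[OF G(1) Y(1)] Y(2) by simp
  have "closed {v. G *v v = v}"
    by (intro closed_Collect_eq matrix_vector_mult_linear_continuous_on continuous_on_id)
  then have cS: "compact S" unfolding S_def
    by (intro closed_Int_compact) (auto simp: compact_sphere)
  obtain w where "G *v w \<noteq> 0"
    using G(3) by (metis matrix_eq matrix_vector_mult_0)
  define v0 where "v0 = (1 / norm (G *v w)) *\<^sub>R (G *v w)"
  have "v0 \<in> S" unfolding S_def v0_def
    using \<open>G *v w \<noteq> 0\<close> by (simp add: matrix_vector_mult_scaleR matrix_vector_mul_assoc G(2))
  then have neS: "S \<noteq> {}" by blast
  have cont: "continuous_on S (\<lambda>v. (Y *v v) \<bullet> v)"
    by (intro continuous_on_inner matrix_vector_mult_linear_continuous_on continuous_on_id)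
  obtain v where vS: "v \<in> S" and vmax: "\<forall>u\<in>S. (Y *v u) \<bullet> u \<le> (Y *v v) \<bullet> v"
    using continuous_attains_sup[OF cS neS cont] by blast
  define l where "l = (Y *v v) \<bullet> v"
  have Gv: "G *v v = v" and nv: "norm v = 1" using vS unfolding S_def by auto
  have bound: "(Y *v u) \<bullet> u \<le> l * (u \<bullet> u)" if "G *v u = u" for u
  proof (cases "u = 0")
    case True then show ?thesis by simp
  next
    case False
    define u' where "u' = (1 / norm u) *\<^sub>R u"
    have "u' \<in> S" unfolding S_def u'_def using that False by (simp add: matrix_vector_mult_scaleR)
    then have "(Y *v u') \<bullet> u' \<le> l" using vmax l_def by blast
    moreover have "(Y *v u') \<bullet> u' = ((Y *v u) \<bullet> u) / (norm u)^2"
      unfolding u'_def by (simp add: matrix_vector_mult_scaleR power2_eq_square)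
    moreover have "u \<bullet> u = (norm u)^2" by (simp add: power2_norm_eq_inner)
    ultimately show ?thesis using False by (simp add: divide_le_eq mult.commute)
  qed
  define w where "w = Y *v v - l *\<^sub>R v"
  have Gw: "G *v w = w" unfolding w_def
    by (simp add: matrix_vector_mult_diff_distrib matrix_vector_mult_scaleR matrix_vector_mul_assoc GY Gv)
  have vv: "v \<bullet> v = 1" using nv by (simp add: power2_norm_eq_inner[symmetric])
  have wv: "w \<bullet> v = 0" by (simp add: w_def inner_diff_left vv l_def)
  have vw: "v \<bullet> w = 0" using wv by (simp add: inner_commute)
  have Yvw: "(Y *v v) \<bullet> w = w \<bullet> w"
  proof -
    have "Y *v v = w + l *\<^sub>R v" by (simp add: w_def)
    then show ?thesis using wv by (simp add: inner_add_left inner_add_right inner_commute)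
  qed
  have "w = 0"
  proof (rule ccontr)
    assume "w \<noteq> 0"
    then have ww: "w \<bullet> w > 0" by simp
    define C where "C = l * (w \<bullet> w) - (Y *v w) \<bullet> w"
    have key: "2 * t * (w \<bullet> w) \<le> t^2 * C" for t
    proof -
      have "G *v (v + t *\<^sub>R w) = v + t *\<^sub>R w"
        by (simp add: matrix_vector_right_distrib matrix_vector_mult_scaleR Gv Gw)
      then have b: "(Y *v (v + t *\<^sub>R w)) \<bullet> (v + t *\<^sub>R w) \<le> l * ((v + t *\<^sub>R w) \<bullet> (v + t *\<^sub>R w))"
        by (rule bound)
      have Ywv: "(Y *v w) \<bullet> v = w \<bullet> w"
        using sym_inner[OF YT, of w v] Yvw by (simp add: inner_commute)
      have "(Y *v (v + t *\<^sub>R w)) \<bullet> (v + t *\<^sub>R w)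
          = l + 2 * t * (w \<bullet> w) + t^2 * ((Y *v w) \<bullet> w)"
        by (simp add: matrix_vector_right_distrib matrix_vector_mult_scaleR inner_add_left
            inner_add_right Ywv Yvw l_def[symmetric] power2_eq_square algebra_simps)
      moreover have "(v + t *\<^sub>R w) \<bullet> (v + t *\<^sub>R w) = 1 + t^2 * (w \<bullet> w)"
        by (simp add: inner_add_left inner_add_right vv wv vw power2_eq_square)
      ultimately show ?thesis using b unfolding C_def by (simp add: algebra_simps)
    qed
    show False
    proof (cases "C \<le> 0")
      case True
      from key[of 1] True ww show False by simp
    next
      case False
      define t where "t = (w \<bullet> w) / C"
      have "t > 0" using False ww unfolding t_def by simp
      from key[of t] have "2 * t * (w \<bullet> w) \<le> t * (t * C)" by (simp add: power2_eq_square)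
      then have "2 * (w \<bullet> w) \<le> t * C" using \<open>t > 0\<close> by simp
      also have "t * C = w \<bullet> w" unfolding t_def using False by simp
      finally show False using ww by simp
    qed
  qed
  then have "Y *v v = l *\<^sub>R v" unfolding w_def by simp
  moreover have "v \<noteq> 0" using nv by auto
  ultimately show ?thesis using Gv by blast
qed

lemma inj_surj:
  fixes f :: "real^'x^'x \<Rightarrow> real^'x^'x"
  assumes V: "subspace V" and f: "linear f" and img: "f ` V \<subseteq> V" and z: "\<forall>x\<in>V. f x = 0 \<longrightarrow> x = 0"
  shows "f ` V = V"
proof -
  have inj: "inj_on f V" using linear_inj_on_iff_eq_0[OF f V] z by simp
  have sp: "span V = V" using V by simp
  have "inj_on f (span V)" unfolding sp by (rule inj)
  then have "dim (f ` V) = dim V" by (rule dim_image_eq[OF f])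
  then show ?thesis
    using subspace_dim_equal[OF linear_subspace_image[OF f V] V img] by simp
qed

lemma V_subspace: "subspace {X. cc X \<and> X ** G = X}"
  unfolding subspace_def
  by (auto intro: cc_add cc_scale cc_zero simp: mm_add_left mm_scale_left)

lemma prim_scalar: assumes "primc G" "cc Y" "Y ** G = Y" shows "\<exists>c. Y = c *\<^sub>R G"
proof -
  from assms(1) have G: "cc G" "G ** G = G" "G \<noteq> 0"
    and min: "\<And>F. cc F \<Longrightarrow> F ** F = F \<Longrightarrow> F ** G = F \<Longrightarrow> F = 0 \<or> F = G"
    unfolding primc_def by auto
  obtain l v where Gv: "G *v v = v" and v0: "v \<noteq> 0" and Yv: "Y *v v = l *\<^sub>R v"
    using eigvec[OF G assms(2,3)] by blast
  define N where "N = Y - l *\<^sub>R G"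
  have Ncc: "cc N" unfolding N_def by (intro cc_diff cc_scale assms G)
  have NG: "N ** G = N" unfolding N_def by (simp add: mm_diff_left mm_scale_left G assms(3))
  have Nv: "N *v v = 0" unfolding N_def
    by (simp add: matrix_vector_mult_diff_rdistrib Yv Gv scaleR_matrix_vector_assoc[symmetric])
  show ?thesis
  proof (cases "N = 0")
    case True then show ?thesis unfolding N_def by auto
  next
    case False
    define V where "V = {X. cc X \<and> X ** G = X}"
    have sV: "subspace V" unfolding V_def by (rule V_subspace)
    have GV: "G \<in> V" unfolding V_def using G by simp
    have multV: "A ** B \<in> V" if "cc A" "B \<in> V" for A B
      using that unfolding V_def by (auto intro: cc_mult simp: matrix_mul_assoc[symmetric])
    have "\<exists>Z\<in>V. Z \<noteq> 0 \<and> N ** Z = 0"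
    proof (rule ccontr)
      assume "\<not> ?thesis"
      then have "\<forall>x\<in>V. N ** x = 0 \<longrightarrow> x = 0" by blast
      moreover have "(\<lambda>X. N ** X) ` V \<subseteq> V" using multV Ncc by blast
      ultimately have "(\<lambda>X. N ** X) ` V = V" using inj_surj[OF sV linear_mm_left] by blast
      then obtain X where X: "X \<in> V" "N ** X = G" using GV by (metis imageE)
      have "v = G *v v" using Gv by simp
      also have "\<dots> = (X ** N) *v v" using X cc_commute[OF Ncc, of X] unfolding V_def by simp
      also have "\<dots> = 0" by (simp add: matrix_vector_mul_assoc[symmetric] Nv)
      finally show False using v0 by simp
    qed
    then obtain Z where ZV: "Z \<in> V" and Z0: "Z \<noteq> 0" and NZ: "N ** Z = 0" by blast
    have Zcc: "cc Z" and ZG: "Z ** G = Z" using ZV unfolding V_def by auto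
    define W where "W = (\<lambda>X. Z ** X) ` V"
    have sW: "subspace W" unfolding W_def by (rule linear_subspace_image[OF linear_mm_left sV])
    have WV: "W \<subseteq> V" unfolding W_def using multV Zcc by blast
    have imgW: "(\<lambda>X. Z ** X) ` W \<subseteq> W" unfolding W_def using multV Zcc by blast
    have injW: "\<forall>x\<in>W. Z ** x = 0 \<longrightarrow> x = 0"
    proof (intro ballI impI)
      fix x assume "x \<in> W" "Z ** x = 0"
      then obtain X where X: "X \<in> V" "x = Z ** X" unfolding W_def by blast
      have Xcc: "cc X" using X unfolding V_def by simp
      have "(Z ** X) ** (Z ** X) = (Z ** (Z ** X)) ** X"
        by (metis Xcc Zcc cc_commute cc_mult matrix_mul_assoc)
      also have "\<dots> = 0" using \<open>Z ** x = 0\<close> X by simp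
      finally have "Z ** X = 0" using cc_reduced cc_mult[OF Zcc Xcc] by blast
      then show "x = 0" using X by simp
    qed
    have surjW: "(\<lambda>X. Z ** X) ` W = W" by (rule inj_surj[OF sW linear_mm_left imgW injW])
    have "Z \<in> W" unfolding W_def using GV ZG by (metis image_eqI)
    then obtain W0 where W0W: "W0 \<in> W" and ZW0: "Z ** W0 = Z" using surjW by (metis imageE)
    obtain X0 where X0V: "X0 \<in> V" and W0d: "W0 = Z ** X0" using W0W unfolding W_def by blast
    have X0cc: "cc X0" using X0V unfolding V_def by simp
    have W0V: "W0 \<in> V" using W0W WV by blast
    have W0cc: "cc W0" and W0G: "W0 ** G = W0" using W0V unfolding V_def by auto
    define D where "D = W0 ** W0 - W0"
    have DW: "D \<in> W"
    proof -
      have "D = Z ** (X0 ** W0 - X0)" unfolding D_def W0d by (simp add: mm_diff_right matrix_mul_assoc)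
      moreover have "X0 ** W0 - X0 \<in> V"
        using X0V W0G unfolding V_def by (auto intro: cc_diff cc_mult X0cc W0cc simp: mm_diff_left matrix_mul_assoc[symmetric])
      ultimately show ?thesis unfolding W_def by blast
    qed
    have "Z ** D = 0" unfolding D_def by (simp add: mm_diff_right matrix_mul_assoc ZW0)
    then have "D = 0" using injW DW by blast
    then have idem: "W0 ** W0 = W0" unfolding D_def by simp
    have "W0 \<noteq> 0" using ZW0 Z0 by auto
    moreover have "W0 \<noteq> G"
    proof
      assume "W0 = G"
      have "N ** W0 = 0" unfolding W0d by (simp add: matrix_mul_assoc NZ)
      then show False using \<open>W0 = G\<close> NG False by simp
    qed
    ultimately show ?thesis using min[OF W0cc idem W0G] by blast
  qed
qed

lemma decomp: assumes "cc G" "G ** G = G" "cc X" shows "X ** G \<in> span {H. primc H}"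
  using assms
proof (induction "dim {X. cc X \<and> X ** G = X}" arbitrary: G X rule: less_induct)
  case less
  show ?case
  proof (cases "G = 0")
    case True then show ?thesis by (simp add: span_zero)
  next
    case G0: False
    show ?thesis
    proof (cases "primc G")
      case True
      have "cc (X ** G)" using less.prems by (intro cc_mult)
      moreover have "(X ** G) ** G = X ** G" using less.prems by (simp add: matrix_mul_assoc[symmetric])
      ultimately obtain c where "X ** G = c *\<^sub>R G" using prim_scalar[OF True] by blast
      then show ?thesis using True by (simp add: span_mul span_base)
    next
      case False
      then obtain G' where G': "cc G'" "G' ** G' = G'" "G' ** G = G'" "G' \<noteq> 0" "G' \<noteq> G"
        using less.prems G0 unfolding primc_def by blast
      have GG': "G ** G' = G'" using cc_commute[OF less.prems(1) G'(1)] G'(3) by simp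
      define G'' where "G'' = G - G'"
      have G''cc: "cc G''" unfolding G''_def using less.prems G' by (intro cc_diff)
      have G''id: "G'' ** G'' = G''" unfolding G''_def
        by (simp add: mm_diff_left mm_diff_right less.prems(2) GG' G'(2,3))
      have G''G: "G'' ** G = G''" unfolding G''_def by (simp add: mm_diff_left less.prems(2) G'(3))
      have GG'': "G ** G'' = G - G'" unfolding G''_def by (simp add: mm_diff_right less.prems(2) GG')
      define V where "V = {X. cc X \<and> X ** G = X}"
      have sub: "dim {X. cc X \<and> X ** K = X} < dim V"
        if K: "cc K" "K ** G = K" "G ** K \<noteq> G" for K
      proof -
        have psub: "{X. cc X \<and> X ** K = X} \<subset> V"
        proof
          show "{X. cc X \<and> X ** K = X} \<subseteq> V" unfolding V_def
          proof safe
            fix X assume "cc X" "X ** K = X"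
            then have "X ** G = (X ** K) ** G" by simp
            also have "\<dots> = X ** (K ** G)" by (simp add: matrix_mul_assoc)
            finally show "X ** G = X" using K(2) \<open>X ** K = X\<close> by simp
          qed
          show "{X. cc X \<and> X ** K = X} \<noteq> V"
            using less.prems K(3) unfolding V_def by blast
        qed
        have s1: "subspace {X. cc X \<and> X ** K = X}" "subspace V"
          unfolding V_def by (rule V_subspace)+
        have "span {X. cc X \<and> X ** K = X} \<subset> span V"
          using psub s1 by (simp only: span_eq_iff[THEN iffD2])
        then show ?thesis by (rule dim_psubset)
      qed
      have d1: "dim {X. cc X \<and> X ** G' = X} < dim V"
        using sub[OF G'(1,3)] GG' G'(5) by simp
      have d2: "dim {X. cc X \<and> X ** G'' = X} < dim V"
        using sub[OF G''cc G''G] GG'' G'(4) by simp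
      have "X ** G' \<in> span {H. primc H}"
        using less.hyps[OF d1[unfolded V_def] G'(1,2) less.prems(3)] .
      moreover have "X ** G'' \<in> span {H. primc H}"
        using less.hyps[OF d2[unfolded V_def] G''cc G''id less.prems(3)] .
      moreover have "X ** G = X ** G' + X ** G''" unfolding G''_def by (simp add: mm_diff_right)
      ultimately show ?thesis by (simp add: span_add)
    qed
  qed
qed

lemma BM_span: "cc X \<Longrightarrow> X \<in> span {H. primc H}"
  using decomp[OF cc_mat1 _ , of X] by simp

lemma prim_orth: assumes "primc H" "primc H'" "H \<noteq> H'" shows "H ** H' = 0"
proof -
  have H: "cc H" "H ** H = H" and minH: "\<And>F. cc F \<Longrightarrow> F ** F = F \<Longrightarrow> F ** H = F \<Longrightarrow> F = 0 \<or> F = H"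
    using assms(1) unfolding primc_def by auto
  have H': "cc H'" "H' ** H' = H'" and minH': "\<And>F. cc F \<Longrightarrow> F ** F = F \<Longrightarrow> F ** H' = F \<Longrightarrow> F = 0 \<or> F = H'"
    using assms(2) unfolding primc_def by auto
  define K where "K = H ** H'"
  have Kcc: "cc K" unfolding K_def using H H' by (intro cc_mult)
  have c: "H' ** H = H ** H'" using cc_commute H(1) H'(1) by blast
  have Kid: "K ** K = K" unfolding K_def
    by (metis H(2) H'(2) c matrix_mul_assoc)
  have KH: "K ** H = K" unfolding K_def by (metis H(2) c matrix_mul_assoc)
  have KH': "K ** H' = K" unfolding K_def by (metis H'(2) matrix_mul_assoc)
  from minH[OF Kcc Kid KH] minH'[OF Kcc Kid KH'] assms(3) show ?thesis unfolding K_def by auto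
qed

lemma prim_independent: "independent {H. primc H}"
  unfolding independent_explicit_module
proof (intro allI impI)
  fix t u v assume t: "finite t" "t \<subseteq> {H. primc H}" "(\<Sum>v\<in>t. u v *\<^sub>R v) = 0" "v \<in> t"
  have "(\<Sum>w\<in>t. u w *\<^sub>R w) ** v = (\<Sum>w\<in>t. u w *\<^sub>R (w ** v))"
    by (simp add: mm_sum_left mm_scale_left)
  also have "\<dots> = (\<Sum>w\<in>t. if w = v then u v *\<^sub>R v else 0)"
  proof (intro sum.cong refl)
    fix w assume "w \<in> t"
    then show "u w *\<^sub>R (w ** v) = (if w = v then u v *\<^sub>R v else 0)"
      using t prim_orth[of w v] unfolding primc_def by auto
  qed
  also have "\<dots> = u v *\<^sub>R v" using t by (simp add: sum.delta')
  finally have "u v *\<^sub>R v = 0" using t(3) by simp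
  moreover have "v \<noteq> 0" using t unfolding primc_def by auto
  ultimately show "u v = 0" by simp
qed

lemma prim_finite: "finite {H. primc H}"
  using prim_independent by (rule finiteI_independent)

lemma cc_J_row: assumes "cc F" shows "F ** Jmat = (\<Sum>y\<in>UNIV. F$a$y) *\<^sub>R Jmat"
proof -
  have c: "cc (F ** Jmat)" using assms cc_J by (rule cc_mult)
  have "(F ** Jmat) $ x $ y = (\<Sum>z\<in>UNIV. F$x$z)" for x y
    by (simp add: matrix_matrix_mult_def Jmat_def)
  moreover have "(F ** Jmat) $ x $ x = (F ** Jmat) $ a $ a" for x
  proof -
    have "cls x x = 0" "cls a a = 0" using cls_0 by blast+
    then have "cls x x = cls a a" by simp
    then show ?thesis by (rule ccD[OF c])
  qed
  ultimately show ?thesis by (simp add: vec_eq_iff Jmat_def)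
qed

lemma JJ: "(Jmat::real^'x^'x) ** (Jmat::real^'x^'x) = real CARD('x) *\<^sub>R (Jmat :: real^'x^'x)"
  by (simp add: matrix_matrix_mult_def Jmat_def vec_eq_iff)

lemma J_ne0: "(Jmat :: real^'x^'x) \<noteq> 0"
  by (simp add: Jmat_def vec_eq_iff)

lemma scaled_J_idem:
  assumes "(c *\<^sub>R Jmat) ** (c *\<^sub>R Jmat) = c *\<^sub>R (Jmat :: real^'x^'x)"
  shows "c = 0 \<or> c = 1 / real CARD('x)"
proof -
  have "(c * c * real CARD('x)) *\<^sub>R (Jmat :: real^'x^'x) = c *\<^sub>R Jmat"
    using assms JJ by (simp add: mm_scale_left mm_scale_right)
  then have "(c * c * real CARD('x) - c) *\<^sub>R (Jmat :: real^'x^'x) = 0"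
    by (simp add: scaleR_diff_left)
  then have "c * c * real CARD('x) - c = 0" using J_ne0 by simp
  then have "c * (c * real CARD('x) - 1) = 0" by (simp add: algebra_simps)
  then have "c = 0 \<or> c * real CARD('x) = 1" by simp
  then show ?thesis by (auto simp: field_simps)
qed

lemma primJ: "primc ((1 / real CARD('x)) *\<^sub>R (Jmat::real^'x^'x))"
  unfolding primc_def
proof (intro conjI allI impI)
  let ?n = "real CARD('x)"
  show "cc ((1 / ?n) *\<^sub>R (Jmat::real^'x^'x))" by (intro cc_scale cc_J)
  show "((1 / ?n) *\<^sub>R (Jmat::real^'x^'x)) ** ((1 / ?n) *\<^sub>R (Jmat::real^'x^'x)) = (1 / ?n) *\<^sub>R (Jmat::real^'x^'x)"
    using JJ by (simp add: mm_scale_left mm_scale_right)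
  show "(1 / ?n) *\<^sub>R (Jmat::real^'x^'x) \<noteq> 0" using J_ne0 by simp
  fix F assume F: "cc F \<and> F ** F = F \<and> F ** ((1 / ?n) *\<^sub>R (Jmat::real^'x^'x)) = F"
  obtain a :: 'x where True by blast
  define c where "c = (\<Sum>y\<in>UNIV. F$a$y) / ?n"
  have "F = c *\<^sub>R (Jmat::real^'x^'x)" using F cc_J_row[of F a] unfolding c_def by (simp add: mm_scale_right)
  then have "c = 0 \<or> c = 1 / ?n" using F by (intro scaled_J_idem) simp
  then show "F = 0 \<or> F = (1 / ?n) *\<^sub>R (Jmat::real^'x^'x)" using \<open>F = c *\<^sub>R (Jmat::real^'x^'x)\<close> by auto
qed

lemma primJ_orth: assumes "primc H" "H \<noteq> (1 / real CARD('x)) *\<^sub>R (Jmat::real^'x^'x)" shows "H ** (Jmat::real^'x^'x) = 0"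
proof -
  have "H ** ((1 / real CARD('x)) *\<^sub>R (Jmat::real^'x^'x)) = 0"
    using prim_orth[OF assms(1) primJ assms(2)] .
  then show ?thesis by (simp add: mm_scale_right)
qed

end

lemma rank_trace:
  fixes E :: "real^'n^'n"
  assumes sym: "transpose E = E" and idem: "E ** E = E"
  shows "real (rank E) = (\<Sum>x\<in>UNIV. E$x$x)"
proof -
  define S where "S = range (\<lambda>v. E *v v)"
  have sS: "subspace S" unfolding S_def
    by (rule linear_subspace_image[OF matrix_vector_mul_linear subspace_UNIV])
  obtain B where B: "B \<subseteq> S" "pairwise orthogonal B" "\<And>x. x \<in> B \<Longrightarrow> norm x = 1"
      "independent B" "card B = dim S" "span B = S"
    using orthonormal_basis_subspace[OF sS] by blast
  have fB: "finite B" using B(4) by (rule finiteI_independent)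
  have Eb: "E *v b = b" if bB: "b \<in> B" for b
  proof -
    obtain u where "b = E *v u" using bB B(1) unfolding S_def by blast
    then show ?thesis by (simp add: matrix_vector_mul_assoc idem)
  qed
  have bb: "b \<bullet> b = 1" if "b \<in> B" for b
    using B(3)[OF that] by (simp add: power2_norm_eq_inner[symmetric])
  have orth: "b \<bullet> c = 0" if "b \<in> B" "c \<in> B" "b \<noteq> c" for b c
    using B(2) that unfolding pairwise_def orthogonal_def by blast
  have expand: "p = (\<Sum>b\<in>B. (p \<bullet> b) *\<^sub>R b)" if "p \<in> span B" for p
  proof -
    define q where "q = p - (\<Sum>b\<in>B. (p \<bullet> b) *\<^sub>R b)"
    have qB: "q \<in> span B" unfolding q_def
      by (intro span_diff that span_sum span_mul span_base) 
    have qc: "q \<bullet> c = 0" if cB: "c \<in> B" for c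
    proof -
      have "(\<Sum>b\<in>B. (p \<bullet> b) *\<^sub>R b) \<bullet> c = (\<Sum>b\<in>B. (p \<bullet> b) * (b \<bullet> c))"
        by (simp add: inner_sum_left)
      also have "\<dots> = (\<Sum>b\<in>B. if b = c then p \<bullet> c else 0)"
        by (intro sum.cong refl) (use cB bb orth in auto)
      also have "\<dots> = p \<bullet> c" using cB fB by simp
      finally show ?thesis unfolding q_def by (simp add: inner_diff_left)
    qed
    obtain u where u: "q = (\<Sum>c\<in>B. u c *\<^sub>R c)" using qB span_finite[OF fB] by blast
    have "q \<bullet> q = (\<Sum>c\<in>B. u c * (q \<bullet> c))"
      by (subst (2) u) (simp add: inner_sum_right)
    also have "\<dots> = 0" using qc by simp
    finally have "q = 0" by simp
    then show ?thesis unfolding q_def by simp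
  qed
  have Ev: "E *v v = (\<Sum>b\<in>B. (v \<bullet> b) *\<^sub>R b)" for v
  proof -
    have "E *v v \<in> span B" unfolding B(6) S_def by blast
    then have "E *v v = (\<Sum>b\<in>B. ((E *v v) \<bullet> b) *\<^sub>R b)" by (rule expand)
    also have "\<dots> = (\<Sum>b\<in>B. (v \<bullet> b) *\<^sub>R b)"
      by (intro sum.cong refl) (simp add: sym_inner[OF sym] Eb)
    finally show ?thesis .
  qed
  have diag: "E$x$x = (\<Sum>b\<in>B. (b$x) * (b$x))" for x
  proof -
    have "E$x$x = (E *v axis x 1) $ x"
      by (simp add: matrix_vector_mult_def axis_def if_distrib cong: if_cong)
    also have "\<dots> = (\<Sum>b\<in>B. (axis x 1 \<bullet> b) * b$x)" unfolding Ev by simp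
    also have "\<dots> = (\<Sum>b\<in>B. (b$x) * (b$x))"
      by (intro sum.cong refl) (simp add: inner_axis' )
    finally show ?thesis .
  qed
  have "(\<Sum>x\<in>UNIV. E$x$x) = (\<Sum>b\<in>B. \<Sum>x\<in>UNIV. (b$x) * (b$x))"
    unfolding diag by (rule sum.swap)
  also have "\<dots> = (\<Sum>b\<in>B. b \<bullet> b)" by (simp add: inner_vec_def)
  also have "\<dots> = real (card B)" using bb by simp
  also have "\<dots> = real (rank E)" using B(5) rank_dim_range[of E] unfolding S_def by simp
  finally show ?thesis by simp
qed


context pms begin

definition Gam :: "'x \<Rightarrow> 'x set" where "Gam x = {y. (x,y) \<in> R 1}"

lemma d1: "1 \<le> d" and d2': "2 \<le> d" using d2 by auto

lemma card_Gam: "card (Gam x) = intnum R 0 1 1"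
proof -
  have "(x,x) \<in> R 0" by (simp add: R0)
  then have "card {z. (x,z) \<in> R 1 \<and> (z,x) \<in> R 1} = intnum R 0 1 1"
    using intnum[of 0 1 1 x x] d1 by simp
  moreover have "{z. (x,z) \<in> R 1 \<and> (z,x) \<in> R 1} = Gam x"
    unfolding Gam_def using R_sym[OF d1] by blast
  ultimately show ?thesis by simp
qed

lemma val_at: "cc M \<Longrightarrow> i \<le> d \<Longrightarrow> (x,y) \<in> R i \<Longrightarrow> M$x$y = val M i"
  using cc_val cls_eq by metis

lemma nbr_sum:
  assumes M: "cc M" and xy: "(x,y) \<in> R 1"
  shows "(\<Sum>z\<in>Gam x. M$y$z) = val M 0 + real (intnum R 1 1 1) * val M 1 + real (intnum R 1 1 2) * val M 2"
proof -
  define A1 where "A1 = {z. (x,z) \<in> R 1 \<and> (z,y) \<in> R 1}"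
  define A2 where "A2 = {z. (x,z) \<in> R 1 \<and> (z,y) \<in> R 2}"
  have cover: "Gam x = insert y (A1 \<union> A2)"
  proof
    show "Gam x \<subseteq> insert y (A1 \<union> A2)"
    proof
      fix z assume "z \<in> Gam x"
      then have "(x,z) \<in> R 1" unfolding Gam_def by simp
      then have "(z,x) \<in> R 1" using R_sym d1 by blast
      then have "z = y \<or> (z,y) \<in> R 1 \<or> (z,y) \<in> R 2" using dist2 xy by blast
      then show "z \<in> insert y (A1 \<union> A2)" unfolding A1_def A2_def using \<open>(x,z) \<in> R 1\<close> by blast
    qed
    show "insert y (A1 \<union> A2) \<subseteq> Gam x" unfolding Gam_def A1_def A2_def using xy by blast
  qed
  have yA: "y \<notin> A1 \<union> A2"
  proof
    assume "y \<in> A1 \<union> A2"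
    then have "(y,y) \<in> R 1 \<or> (y,y) \<in> R 2" unfolding A1_def A2_def by blast
    moreover have "(y,y) \<in> R 0" by (simp add: R0)
    ultimately show False using R_disj[of 0 1 y y] R_disj[of 0 2 y y] d2 by auto
  qed
  have dis: "A1 \<inter> A2 = {}" unfolding A1_def A2_def using R_disj[of 1 2] d2 by fastforce
  have s1: "(\<Sum>z\<in>A1. M$y$z) = real (intnum R 1 1 1) * val M 1"
  proof -
    have "(\<Sum>z\<in>A1. M$y$z) = (\<Sum>z\<in>A1. val M 1)"
    proof (intro sum.cong refl)
      fix z assume "z \<in> A1"
      then have "(y,z) \<in> R 1" unfolding A1_def using R_sym d1 by blast
      then show "M$y$z = val M 1" using val_at[OF M d1] by blast
    qed
    also have "\<dots> = real (card A1) * val M 1" by simp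
    also have "card A1 = intnum R 1 1 1" unfolding A1_def using intnum[of 1 1 1 x y] d1 xy by simp
    finally show ?thesis .
  qed
  have s2: "(\<Sum>z\<in>A2. M$y$z) = real (intnum R 1 1 2) * val M 2"
  proof -
    have "(\<Sum>z\<in>A2. M$y$z) = (\<Sum>z\<in>A2. val M 2)"
    proof (intro sum.cong refl)
      fix z assume "z \<in> A2"
      then have "(y,z) \<in> R 2" unfolding A2_def using R_sym d2 by blast
      then show "M$y$z = val M 2" using val_at[OF M d2'] by blast
    qed
    also have "\<dots> = real (card A2) * val M 2" by simp
    also have "card A2 = intnum R 1 1 2" unfolding A2_def using intnum[of 1 1 2 x y] d1 d2 xy by simp
    finally show ?thesis .
  qed
  have "(\<Sum>z\<in>Gam x. M$y$z) = M$y$y + ((\<Sum>z\<in>A1. M$y$z) + (\<Sum>z\<in>A2. M$y$z))"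
    unfolding cover using yA dis by (simp add: sum.union_disjoint)
  moreover have "M$y$y = val M 0" using val_at[OF M, of 0 y y] by (simp add: R0)
  ultimately show ?thesis using s1 s2 by simp
qed

lemma row_sum1: assumes M: "cc M" shows "(\<Sum>z\<in>Gam x. M$x$z) = real (intnum R 0 1 1) * val M 1"
proof -
  have "(\<Sum>z\<in>Gam x. M$x$z) = (\<Sum>z\<in>Gam x. val M 1)"
    by (intro sum.cong refl) (use val_at[OF M d1] in \<open>auto simp: Gam_def\<close>)
  then show ?thesis using card_Gam by simp
qed

lemma A_mult: "(rel_mat R 1 ** M)$x$y = (\<Sum>z\<in>Gam x. M$z$y)"
proof -
  have "(rel_mat R 1 ** M)$x$y = (\<Sum>z\<in>UNIV. if (x,z) \<in> R 1 then M$z$y else 0)"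
    unfolding matrix_matrix_mult_def rel_mat_nth by (simp, intro sum.cong refl) simp
  also have "\<dots> = (\<Sum>z\<in>Gam x. M$z$y)"
    by (simp add: sum.If_cases Gam_def)
  finally show ?thesis .
qed

lemma b_pos: "intnum R 1 1 2 > 0"
proof -
  obtain x y where "(x,y) \<in> R 2" using R_nonempty[OF d2'] by auto
  then obtain z where z: "(x,z) \<in> R 1" "(z,y) \<in> R 1" using R2_char by blast
  have "y \<in> {w. (z,w) \<in> R 1 \<and> (w,x) \<in> R 2}"
    using z \<open>(x,y) \<in> R 2\<close> R_sym d2 by blast
  moreover have "card {w. (z,w) \<in> R 1 \<and> (w,x) \<in> R 2} = intnum R 1 1 2"
    using intnum[of 1 1 2 z x] d1 d2 z R_sym by blast
  ultimately show ?thesis by (metis card_0_eq empty_iff finite gr0I)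
qed

lemma R1_ne: "\<exists>x y. (x,y) \<in> R 1" using R_nonempty[OF d1] by auto

end

lemma swap3: "(\<Sum>a\<in>A. \<Sum>b\<in>B. \<Sum>v\<in>C. f a b v) = (\<Sum>v\<in>C. \<Sum>a\<in>A. \<Sum>b\<in>B. f a b v)"
proof -
  have "\<And>a. (\<Sum>b\<in>B. \<Sum>v\<in>C. f a b v) = (\<Sum>v\<in>C. \<Sum>b\<in>B. f a b v)" by (rule sum.swap)
  then have "(\<Sum>a\<in>A. \<Sum>b\<in>B. \<Sum>v\<in>C. f a b v) = (\<Sum>a\<in>A. \<Sum>v\<in>C. \<Sum>b\<in>B. f a b v)" by simp
  also have "\<dots> = (\<Sum>v\<in>C. \<Sum>a\<in>A. \<Sum>b\<in>B. f a b v)" by (rule sum.swap)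
  finally show ?thesis .
qed

lemma gen4:
  fixes f g :: "'y \<Rightarrow> 'a \<Rightarrow> 'b \<Rightarrow> real"
  shows "(\<Sum>a\<in>A. \<Sum>b\<in>B. (\<Sum>y\<in>Y. f y a b) * (\<Sum>z\<in>Z. g z a b))
       = (\<Sum>y\<in>Y. \<Sum>z\<in>Z. \<Sum>a\<in>A. \<Sum>b\<in>B. f y a b * g z a b)"
proof -
  have "(\<Sum>a\<in>A. \<Sum>b\<in>B. (\<Sum>y\<in>Y. f y a b) * (\<Sum>z\<in>Z. g z a b))
      = (\<Sum>a\<in>A. \<Sum>b\<in>B. \<Sum>y\<in>Y. \<Sum>z\<in>Z. f y a b * g z a b)"
    by (simp add: sum_product)
  also have "\<dots> = (\<Sum>y\<in>Y. \<Sum>a\<in>A. \<Sum>b\<in>B. \<Sum>z\<in>Z. f y a b * g z a b)" by (rule swap3)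
  also have "\<dots> = (\<Sum>y\<in>Y. \<Sum>z\<in>Z. \<Sum>a\<in>A. \<Sum>b\<in>B. f y a b * g z a b)"
    by (intro sum.cong refl swap3)
  finally show ?thesis .
qed

lemma discr:
  fixes a b c :: real
  assumes q: "\<And>t. 0 \<le> c - 2*t*b + t^2*a" and a: "a \<ge> 0"
  shows "b^2 \<le> a * c"
proof (cases "a = 0")
  case True
  have "b = 0"
  proof (rule ccontr)
    assume "b \<noteq> 0"
    have "0 \<le> c - 2*((c+1)/(2*b))*b" using q[of "(c+1)/(2*b)"] True by simp
    also have "\<dots> = -1" using \<open>b \<noteq> 0\<close> by (simp add: field_simps)
    finally show False by simp
  qed
  then show ?thesis using True by simp
next
  case False
  then have ap: "a > 0" using a by simp
  have "0 \<le> c - 2*(b/a)*b + (b/a)^2*a" by (rule q)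
  also have "\<dots> = (a*c - b^2)/a" using ap by (simp add: field_simps power2_eq_square)
  finally show ?thesis using ap by (simp add: divide_nonneg_pos zero_le_divide_iff)
qed

locale psE = pms d R for d and R :: "nat \<Rightarrow> ('x::finite \<times> 'x) set" +
  fixes E :: "real^'x^'x" and th :: real
  assumes primE: "primc E" and eig: "rel_mat R 1 ** E = th *\<^sub>R E"
begin

abbreviation "kk \<equiv> real (intnum R 0 1 1)"
abbreviation "aa \<equiv> real (intnum R 1 1 1)"
abbreviation "bb \<equiv> real (intnum R 1 1 2)"

definition "e0 = val E 0"
definition "e1 = val E 1"
definition "e2 = val E 2"

lemma Ecc: "cc E" and EE: "E ** E = E" and Ene: "E \<noteq> 0"
  using primE unfolding primc_def by auto

lemma Esym: "E$y$x = E$x$y" using cc_sym[OF Ecc] .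

lemma Exx: "E$x$x = e0" unfolding e0_def using val_at[OF Ecc, of 0 x x] by (simp add: R0)

lemma nn_pos: "real CARD('x) > 0" by simp

lemma eq1: "kk * e1 = th * e0"
proof -
  obtain x :: 'x where True by blast
  have "(rel_mat R 1 ** E)$x$x = (\<Sum>z\<in>Gam x. E$z$x)" by (rule A_mult)
  also have "\<dots> = (\<Sum>z\<in>Gam x. E$x$z)" using Esym by simp
  also have "\<dots> = kk * e1" unfolding e1_def by (rule row_sum1[OF Ecc])
  finally show ?thesis using eig Exx by (simp add: vec_eq_iff)
qed

lemma eq2: "e0 + aa * e1 + bb * e2 = th * e1"
proof -
  obtain x y where xy: "(x,y) \<in> R 1" using R1_ne by blast
  have "(rel_mat R 1 ** E)$x$y = (\<Sum>z\<in>Gam x. E$z$y)" by (rule A_mult)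
  also have "\<dots> = (\<Sum>z\<in>Gam x. E$y$z)" using Esym by simp
  also have "\<dots> = e0 + aa * e1 + bb * e2" unfolding e0_def e1_def e2_def by (rule nbr_sum[OF Ecc xy])
  finally have "e0 + aa * e1 + bb * e2 = th * E$x$y" using eig by (simp add: vec_eq_iff)
  moreover have "E$x$y = e1" unfolding e1_def using val_at[OF Ecc d1 xy] .
  ultimately show ?thesis by simp
qed

lemma rankE: "real (rank E) = real CARD('x) * e0"
proof -
  have "real (rank E) = (\<Sum>x\<in>UNIV. E$x$x)" by (rule rank_trace[OF cc_transpose[OF Ecc] EE])
  also have "\<dots> = real CARD('x) * e0" by (simp add: Exx)
  finally show ?thesis .
qed

lemma rank_pos: "rank E > 0" using Ene rank_eq_0 by auto

lemma e0_pos: "e0 > 0"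
proof -
  have "real (rank E) > 0" using rank_pos by simp
  then show ?thesis using rankE nn_pos by (simp add: zero_less_mult_iff)
qed

lemma EE_entry: "(\<Sum>a\<in>UNIV. E$y$a * E$z$a) = E$y$z"
proof -
  have "(E ** E)$y$z = (\<Sum>a\<in>UNIV. E$y$a * E$a$z)" by (simp add: matrix_matrix_mult_def)
  then show ?thesis using EE Esym[of _ z] by simp
qed

definition mu :: "'x \<Rightarrow> 'x \<Rightarrow> real" where
  "mu a b = (1/real CARD('x)) * (\<Sum>v\<in>UNIV. E$v$a * E$v$b)"

definition w :: "'x \<Rightarrow> 'x \<Rightarrow> 'x \<Rightarrow> real" where
  "w x a b = E$x$a * E$x$b - mu a b"

definition Pf :: "'x \<Rightarrow> 'x \<Rightarrow> real" where
  "Pf x y = (E$x$y)^2 - e0/real CARD('x)"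

lemma T2: "(\<Sum>a\<in>UNIV. \<Sum>b\<in>UNIV. E$y$a * E$y$b * mu a b) = e0/real CARD('x)"
proof -
  have pw: "E$y$a * E$y$b * mu a b = (1/real CARD('x)) * (\<Sum>v\<in>UNIV. (E$y$a * E$v$a) * (E$y$b * E$v$b))" for a b
    unfolding mu_def by (simp add: sum_distrib_left mult.assoc mult.left_commute)
  have "(\<Sum>a\<in>UNIV. \<Sum>b\<in>UNIV. E$y$a * E$y$b * mu a b)
      = (1/real CARD('x)) * (\<Sum>a\<in>UNIV. \<Sum>b\<in>UNIV. \<Sum>v\<in>UNIV. (E$y$a * E$v$a) * (E$y$b * E$v$b))"
    by (simp only: pw sum_distrib_left)
  also have "\<dots> = (1/real CARD('x)) * (\<Sum>v\<in>UNIV. \<Sum>a\<in>UNIV. \<Sum>b\<in>UNIV. (E$y$a * E$v$a) * (E$y$b * E$v$b))"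
    by (subst swap3) (rule refl)
  also have "\<dots> = (1/real CARD('x)) * (\<Sum>v\<in>UNIV. (\<Sum>a\<in>UNIV. E$y$a * E$v$a) * (\<Sum>b\<in>UNIV. E$y$b * E$v$b))"
    by (simp only: sum_product)
  also have "\<dots> = (1/real CARD('x)) * (\<Sum>v\<in>UNIV. E$y$v * E$y$v)"
    by (simp only: EE_entry)
  also have "\<dots> = (1/real CARD('x)) * E$y$y" by (simp only: EE_entry)
  also have "\<dots> = e0/real CARD('x)" by (simp add: Exx)
  finally show ?thesis .
qed

lemma T4': "(\<Sum>a\<in>UNIV. \<Sum>b\<in>UNIV. mu a b * mu a b) = e0/real CARD('x)"
proof -
  have pw: "mu a b * mu a b = (1/real CARD('x)) * (\<Sum>v\<in>UNIV. E$v$a * E$v$b * mu a b)" for a b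
  proof -
    have "mu a b * mu a b = ((1/real CARD('x)) * (\<Sum>v\<in>UNIV. E$v$a * E$v$b)) * mu a b"
      by (subst (1) mu_def) (rule refl)
    also have "\<dots> = (1/real CARD('x)) * (\<Sum>v\<in>UNIV. E$v$a * E$v$b * mu a b)"
      by (simp only: sum_distrib_right mult.assoc)
    finally show ?thesis .
  qed
  have "(\<Sum>a\<in>UNIV. \<Sum>b\<in>UNIV. mu a b * mu a b)
      = (1/real CARD('x)) * (\<Sum>a\<in>UNIV. \<Sum>b\<in>UNIV. \<Sum>v\<in>UNIV. E$v$a * E$v$b * mu a b)"
    by (simp only: pw sum_distrib_left)
  also have "\<dots> = (1/real CARD('x)) * (\<Sum>v\<in>UNIV. \<Sum>a\<in>UNIV. \<Sum>b\<in>UNIV. E$v$a * E$v$b * mu a b)"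
    by (subst swap3) (rule refl)
  also have "\<dots> = e0/real CARD('x)" by (simp add: T2)
  finally show ?thesis .
qed

lemma gram: "(\<Sum>a\<in>UNIV. \<Sum>b\<in>UNIV. w y a b * w z a b) = Pf y z"
proof -
  have pw: "w y a b * w z a b = (E$y$a * E$z$a) * (E$y$b * E$z$b) - E$y$a * E$y$b * mu a b
       - E$z$a * E$z$b * mu a b + mu a b * mu a b" for a b
    unfolding w_def by (simp add: algebra_simps)
  have "(\<Sum>a\<in>UNIV. \<Sum>b\<in>UNIV. w y a b * w z a b)
     = (\<Sum>a\<in>UNIV. \<Sum>b\<in>UNIV. (E$y$a * E$z$a) * (E$y$b * E$z$b))
       - (\<Sum>a\<in>UNIV. \<Sum>b\<in>UNIV. E$y$a * E$y$b * mu a b)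
       - (\<Sum>a\<in>UNIV. \<Sum>b\<in>UNIV. E$z$a * E$z$b * mu a b)
       + (\<Sum>a\<in>UNIV. \<Sum>b\<in>UNIV. mu a b * mu a b)"
    by (simp only: pw sum.distrib sum_subtractf)
  also have "(\<Sum>a\<in>UNIV. \<Sum>b\<in>UNIV. (E$y$a * E$z$a) * (E$y$b * E$z$b)) = (E$y$z)^2"
    by (simp only: sum_product[symmetric] EE_entry power2_eq_square)
  finally show ?thesis unfolding T2 T4' Pf_def by simp
qed

end

context psE begin

definition s :: "'x \<Rightarrow> 'x \<Rightarrow> 'x \<Rightarrow> real" where "s x a b = (\<Sum>y\<in>Gam x. w y a b)"

definition "S0 = (\<Sum>x\<in>UNIV. \<Sum>a\<in>UNIV. \<Sum>b\<in>UNIV. w x a b * w x a b)"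
definition "S1 = (\<Sum>x\<in>UNIV. \<Sum>a\<in>UNIV. \<Sum>b\<in>UNIV. s x a b * w x a b)"
definition "S2 = (\<Sum>x\<in>UNIV. \<Sum>a\<in>UNIV. \<Sum>b\<in>UNIV. s x a b * s x a b)"

lemma S0_eq: "S0 = (\<Sum>x\<in>UNIV. Pf x x)"
  unfolding S0_def by (simp add: gram)

lemma S1_eq: "S1 = (\<Sum>x\<in>UNIV. \<Sum>y\<in>Gam x. Pf y x)"
proof -
  have "(\<Sum>a\<in>UNIV. \<Sum>b\<in>UNIV. s x a b * w x a b) = (\<Sum>y\<in>Gam x. Pf y x)" for x
  proof -
    have "(\<Sum>a\<in>UNIV. \<Sum>b\<in>UNIV. s x a b * w x a b) = (\<Sum>a\<in>UNIV. \<Sum>b\<in>UNIV. \<Sum>y\<in>Gam x. w y a b * w x a b)"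
      unfolding s_def by (simp add: sum_distrib_right)
    also have "\<dots> = (\<Sum>y\<in>Gam x. \<Sum>a\<in>UNIV. \<Sum>b\<in>UNIV. w y a b * w x a b)"
      by (subst swap3) (rule refl)
    also have "\<dots> = (\<Sum>y\<in>Gam x. Pf y x)" by (simp add: gram)
    finally show ?thesis .
  qed
  then show ?thesis unfolding S1_def by simp
qed

lemma S2_eq: "S2 = (\<Sum>x\<in>UNIV. \<Sum>y\<in>Gam x. \<Sum>z\<in>Gam x. Pf y z)"
proof -
  have "(\<Sum>a\<in>UNIV. \<Sum>b\<in>UNIV. s x a b * s x a b) = (\<Sum>y\<in>Gam x. \<Sum>z\<in>Gam x. Pf y z)" for x
  proof -
    have "(\<Sum>a\<in>UNIV. \<Sum>b\<in>UNIV. s x a b * s x a b)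
        = (\<Sum>y\<in>Gam x. \<Sum>z\<in>Gam x. \<Sum>a\<in>UNIV. \<Sum>b\<in>UNIV. w y a b * w z a b)"
      unfolding s_def by (rule gen4)
    also have "\<dots> = (\<Sum>y\<in>Gam x. \<Sum>z\<in>Gam x. Pf y z)" by (simp add: gram)
    finally show ?thesis .
  qed
  then show ?thesis unfolding S2_def by simp
qed

lemma quad_expand:
  "(\<Sum>x\<in>UNIV. \<Sum>a\<in>UNIV. \<Sum>b\<in>UNIV. (s x a b - t * w x a b)^2) = S2 - 2*t*S1 + t^2*S0"
proof -
  have "(\<Sum>x\<in>UNIV. \<Sum>a\<in>UNIV. \<Sum>b\<in>UNIV. (s x a b - t * w x a b)^2)
     = (\<Sum>x\<in>UNIV. \<Sum>a\<in>UNIV. \<Sum>b\<in>UNIV. s x a b * s x a b - (2*t) * (s x a b * w x a b) + t^2 * (w x a b * w x a b))"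
    by (simp add: power2_eq_square algebra_simps)
  also have "\<dots> = S2 - 2*t*S1 + t^2*S0"
    unfolding S0_def S1_def S2_def by (simp add: sum.distrib sum_subtractf sum_distrib_left)
  finally show ?thesis .
qed

lemma quad_nonneg: "0 \<le> S2 - 2*t*S1 + t^2*S0"
proof -
  have "0 \<le> (\<Sum>x\<in>UNIV. \<Sum>a\<in>UNIV. \<Sum>b\<in>UNIV. (s x a b - t * w x a b)^2)"
    by (intro sum_nonneg) simp
  then show ?thesis using quad_expand by simp
qed

lemma S0_nonneg: "S0 \<ge> 0"
  unfolding S0_def by (intro sum_nonneg) simp

lemma S_disc: "S1^2 \<le> S0 * S2"
  using discr[OF quad_nonneg S0_nonneg] .

definition Pm :: "real^'x^'x" where "Pm = (\<chi> x y. Pf x y)"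

lemma Pm_nth: "Pm$x$y = Pf x y" by (simp add: Pm_def)

lemma Pm_cc: "cc Pm"
proof (rule ccI)
  fix x y x' y' assume "cls x y = cls x' y'"
  then have "E$x$y = E$x'$y'" by (rule ccD[OF Ecc])
  then show "Pm$x$y = Pm$x'$y'" by (simp add: Pm_nth Pf_def)
qed

lemma Pf_sym: "Pf y x = Pf x y" unfolding Pf_def using Esym by simp

definition "p0 = e0^2 - e0/real CARD('x)"
definition "p1 = e1^2 - e0/real CARD('x)"
definition "p2 = e2^2 - e0/real CARD('x)"

lemma val_Pm: "val Pm 0 = p0" "val Pm 1 = p1" "val Pm 2 = p2"
  unfolding val_def Pm_nth Pf_def p0_def p1_def p2_def e0_def e1_def e2_def val_def by simp_all

lemma S0_val: "S0 = real CARD('x) * p0"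
proof -
  have "Pf x x = p0" for x using val_at[OF Pm_cc, of 0 x x] val_Pm by (simp add: R0 Pm_nth)
  then show ?thesis unfolding S0_eq by simp
qed

lemma S1_val: "S1 = real CARD('x) * (kk * p1)"
proof -
  have "(\<Sum>y\<in>Gam x. Pf y x) = kk * p1" for x
  proof -
    have "(\<Sum>y\<in>Gam x. Pf y x) = (\<Sum>y\<in>Gam x. Pm$x$y)" by (simp add: Pm_nth Pf_sym)
    also have "\<dots> = kk * p1" using row_sum1[OF Pm_cc] val_Pm by simp
    finally show ?thesis .
  qed
  then show ?thesis unfolding S1_eq by simp
qed

lemma S2_val: "S2 = real CARD('x) * (kk * (p0 + aa * p1 + bb * p2))"
proof -
  have "(\<Sum>y\<in>Gam x. \<Sum>z\<in>Gam x. Pf y z) = kk * (p0 + aa * p1 + bb * p2)" for x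
  proof -
    have "(\<Sum>y\<in>Gam x. \<Sum>z\<in>Gam x. Pf y z) = (\<Sum>y\<in>Gam x. p0 + aa * p1 + bb * p2)"
    proof (intro sum.cong refl)
      fix y assume "y \<in> Gam x"
      then have "(x,y) \<in> R 1" unfolding Gam_def by simp
      have "(\<Sum>z\<in>Gam x. Pf y z) = (\<Sum>z\<in>Gam x. Pm$y$z)" by (simp add: Pm_nth)
      also have "\<dots> = p0 + aa * p1 + bb * p2"
        using nbr_sum[OF Pm_cc \<open>(x,y) \<in> R 1\<close>] val_Pm by simp
      finally show "(\<Sum>z\<in>Gam x. Pf y z) = p0 + aa * p1 + bb * p2" .
    qed
    also have "\<dots> = kk * (p0 + aa * p1 + bb * p2)" using card_Gam by simp
    finally show ?thesis .
  qed
  then show ?thesis unfolding S2_eq by simp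
qed

lemma eig_from_eq:
  assumes eq: "S1^2 = S0 * S2" and S0p: "S0 > 0"
  shows "rel_mat R 1 ** Pm = (S1/S0) *\<^sub>R Pm"
proof -
  define t where "t = S1/S0"
  have "S2 - 2*t*S1 + t^2*S0 = (S0 * S2 - S1^2) / S0"
    unfolding t_def using S0p by (simp add: field_simps power2_eq_square)
  also have "\<dots> = 0" using eq by simp
  finally have "(\<Sum>x\<in>UNIV. \<Sum>a\<in>UNIV. \<Sum>b\<in>UNIV. (s x a b - t * w x a b)^2) = 0"
    using quad_expand by simp
  then have "\<forall>x\<in>UNIV. (\<Sum>a\<in>UNIV. \<Sum>b\<in>UNIV. (s x a b - t * w x a b)^2) = 0"
    by (subst (asm) sum_nonneg_eq_0_iff) (auto intro!: sum_nonneg)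
  then have "\<forall>x a. (\<Sum>b\<in>UNIV. (s x a b - t * w x a b)^2) = 0"
    by (subst (asm) sum_nonneg_eq_0_iff) (auto intro!: sum_nonneg)
  then have "\<forall>x a b. (s x a b - t * w x a b)^2 = 0"
    by (subst (asm) sum_nonneg_eq_0_iff) (auto intro!: sum_nonneg)
  then have swt: "s x a b = t * w x a b" for x a b by simp
  have "(rel_mat R 1 ** Pm)$x$z = t * Pm$x$z" for x z
  proof -
    have "(rel_mat R 1 ** Pm)$x$z = (\<Sum>y\<in>Gam x. Pf y z)" unfolding A_mult by (simp add: Pm_nth)
    also have "\<dots> = (\<Sum>y\<in>Gam x. \<Sum>a\<in>UNIV. \<Sum>b\<in>UNIV. w y a b * w z a b)" by (simp add: gram)
    also have "\<dots> = (\<Sum>a\<in>UNIV. \<Sum>b\<in>UNIV. \<Sum>y\<in>Gam x. w y a b * w z a b)"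
      by (subst swap3) (rule refl)
    also have "\<dots> = (\<Sum>a\<in>UNIV. \<Sum>b\<in>UNIV. s x a b * w z a b)"
      unfolding s_def by (simp add: sum_distrib_right)
    also have "\<dots> = (\<Sum>a\<in>UNIV. \<Sum>b\<in>UNIV. t * (w x a b * w z a b))"
      by (simp add: swt mult.assoc)
    also have "\<dots> = t * Pf x z" by (simp add: sum_distrib_left[symmetric] gram)
    finally show ?thesis by (simp add: Pm_nth)
  qed
  then show ?thesis unfolding t_def by (simp add: vec_eq_iff)
qed

lemma eq_from_eig:
  assumes eig: "rel_mat R 1 ** Pm = eta *\<^sub>R Pm"
  shows "S1^2 = S0 * S2"
proof -
  have AP: "(\<Sum>y\<in>Gam x. Pf y z) = eta * Pf x z" for x z
  proof -
    have "(\<Sum>y\<in>Gam x. Pf y z) = (rel_mat R 1 ** Pm)$x$z" unfolding A_mult by (simp add: Pm_nth)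
    then show ?thesis using eig by (simp add: Pm_nth)
  qed
  have h1: "S1 = eta * S0" unfolding S1_eq S0_eq by (simp add: AP sum_distrib_left)
  have "S2 = (\<Sum>x\<in>UNIV. \<Sum>y\<in>Gam x. eta * Pf x y)"
    unfolding S2_eq
  proof (intro sum.cong refl)
    fix x y
    have "(\<Sum>z\<in>Gam x. Pf y z) = (\<Sum>z\<in>Gam x. Pf z y)" by (intro sum.cong refl) (rule Pf_sym)
    also have "\<dots> = eta * Pf x y" by (rule AP)
    finally show "(\<Sum>z\<in>Gam x. Pf y z) = eta * Pf x y" .
  qed
  also have "\<dots> = eta * S1" unfolding S1_eq sum_distrib_left by (intro sum.cong refl) (simp add: Pf_sym)
  finally have h2: "S2 = eta * S1" .
  show ?thesis using h1 h2 by (simp add: power2_eq_square)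
qed

lemma Pm_hadamard: "Pm = hadamard E E - (e0 / real CARD('x)) *\<^sub>R Jmat"
  by (simp add: vec_eq_iff Pm_nth Pf_def hadamard_def Jmat_def power2_eq_square)

lemma hadEE_cc: "cc (hadamard E E)" by (rule cc_hadamard[OF Ecc Ecc])

lemma hadEE_J: "hadamard E E ** Jmat = e0 *\<^sub>R Jmat"
proof -
  obtain a :: 'x where True by blast
  have "(\<Sum>y\<in>UNIV. hadamard E E $ a $ y) = e0"
    using EE_entry[of a a] by (simp add: hadamard_def Exx)
  then show ?thesis using cc_J_row[OF hadEE_cc, of a] by simp
qed

lemma prim_set: "{H. prim_idem d R H} = {H. primc H}" using prim_idem_iff by simp

lemma KF:
  assumes kr: "krein_expansion d R E E q"
  shows "(\<Sum>H\<in>{H. prim_idem d R H} - {(1 / real CARD('x)) *\<^sub>R Jmat}. q H *\<^sub>R H)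
         = real CARD('x) *\<^sub>R Pm"
proof -
  let ?n = "real CARD('x)"
  let ?J' = "(1 / ?n) *\<^sub>R (Jmat :: real^'x^'x)"
  let ?Sp = "{H. primc H}"
  define F where "F = (\<Sum>H\<in>?Sp - {?J'}. q H *\<^sub>R H)"
  have fin: "finite ?Sp" by (rule prim_finite)
  have J'in: "?J' \<in> ?Sp" using primJ by simp
  have had: "hadamard E E = (1 / ?n) *\<^sub>R (\<Sum>H\<in>?Sp. q H *\<^sub>R H)"
    using kr unfolding krein_expansion_def prim_set .
  have split: "(\<Sum>H\<in>?Sp. q H *\<^sub>R H) = q ?J' *\<^sub>R ?J' + F"
    unfolding F_def by (rule sum.remove[OF fin J'in])
  have FJ: "F ** (Jmat::real^'x^'x) = 0"
  proof -
    have "F ** (Jmat::real^'x^'x) = (\<Sum>H\<in>?Sp - {?J'}. q H *\<^sub>R (H ** (Jmat::real^'x^'x)))"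
      unfolding F_def by (simp add: mm_sum_left mm_scale_left)
    also have "\<dots> = 0" by (intro sum.neutral) (simp add: primJ_orth)
    finally show ?thesis .
  qed
  have J'J: "?J' ** (Jmat::real^'x^'x) = Jmat" by (simp add: mm_scale_left JJ)
  have "e0 *\<^sub>R (Jmat :: real^'x^'x) = hadamard E E ** (Jmat::real^'x^'x)" using hadEE_J by simp
  also have "\<dots> = (1 / ?n) *\<^sub>R ((q ?J' *\<^sub>R ?J' + F) ** (Jmat::real^'x^'x))"
    unfolding had split by (simp add: mm_scale_left)
  also have "\<dots> = (q ?J' / ?n) *\<^sub>R Jmat"
    by (simp add: mm_add_left mm_scale_left JJ FJ)
  finally have "e0 *\<^sub>R (Jmat :: real^'x^'x) = (q ?J' / ?n) *\<^sub>R Jmat" .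
  then have "e0 = q ?J' / ?n" using J_ne0 by (metis scaleR_cancel_right)
  then have qJ: "q ?J' = ?n * e0" by simp
  have "?n *\<^sub>R hadamard E E = q ?J' *\<^sub>R ?J' + F" unfolding had split by simp
  then have "F = ?n *\<^sub>R hadamard E E - e0 *\<^sub>R Jmat" using qJ by (simp add: algebra_simps)
  also have "\<dots> = ?n *\<^sub>R Pm" unfolding Pm_hadamard by (simp add: algebra_simps)
  finally show ?thesis unfolding F_def prim_set .
qed

lemma krein_exists: "\<exists>q. krein_expansion d R E E q"
proof -
  let ?n = "real CARD('x)"
  have "hadamard E E \<in> span {H. primc H}" using hadEE_cc by (rule BM_span)
  then obtain c where c: "hadamard E E = (\<Sum>H\<in>{H. primc H}. c H *\<^sub>R H)"
    using span_finite[OF prim_finite] by auto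
  have "hadamard E E = (1 / ?n) *\<^sub>R (\<Sum>H\<in>{H. primc H}. (?n * c H) *\<^sub>R H)"
    unfolding c by (simp add: scaleR_sum_right)
  then have "krein_expansion d R E E (\<lambda>H. ?n * c H)"
    unfolding krein_expansion_def prim_set by simp
  then show ?thesis by blast
qed

end

lemma polyX:
  fixes a b t k e0 e1 e2 n m :: real
  assumes "k = 1 + a + b" "k * e1 = t * e0" "b * k * e2 = (t*t - k - a*t) * e0" "m = n * e0"
  shows "((n*e0^2 - e0) * ((n*e0^2 - e0) + a * (n*e1^2 - e0) + b * (n*e2^2 - e0)) - k * (n*e1^2 - e0)^2) * (b^2 * k^4)
     = b * k * e0^2 * m * (m * (b*k^3 + a*b*k*t*t + k*(t*t-k-a*t)^2 - b*t^4)
                           - k * (b*k^3 + b*k^2 + a*b*t*t + (t*t-k-a*t)^2 - 2*b*k*t*t))"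
  using assms by algebra

lemma polyA:
  fixes a b t k :: real
  assumes "k = 1 + a + b"
  shows "b*k^3 + a*b*k*t*t + k*(t*t-k-a*t)^2 - b*t^4 = a*b*(t-k)^2 + (t*t-k-a*t - b*k)^2 + a*(b*t - (t*t-k-a*t))^2"
  using assms by algebra

lemma polyPI:
  fixes a b t k :: real
  assumes "k = 1 + a + b"
  shows "(b*k^3 + b*k^2 + a*b*t*t + (t*t-k-a*t)^2 - 2*b*k*t*t) * (((a+1)*t+k)^2+k*a*b)
       = (b*k^3 + a*b*k*t*t + k*(t*t-k-a*t)^2 - b*t^4) * (((a+1)*t+k)^2+k*a*b - (t+1)^2*a*(a+1))"
  using assms by algebra

lemma final_alg:
  fixes a b t k e0 e1 e2 n m X :: real
  assumes k: "k = 1 + a + b" and a: "a \<ge> 0" and b: "b > 0" and n: "n > 0" and e0: "e0 > 0"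
    and h1: "k * e1 = t * e0" and h2: "e0 + a*e1 + b*e2 = t*e1" and m: "m = n*e0"
    and tk: "t \<noteq> k" "t \<noteq> -k"
    and X: "X = (e0^2 - e0/n) * ((e0^2 - e0/n) + a*(e1^2 - e0/n) + b*(e2^2 - e0/n)) - k*(e1^2 - e0/n)^2"
  shows "(0 \<le> X \<longrightarrow> k - k * (t + 1)^2 * a * (a + 1) / (((a + 1) * t + k)^2 + k * a * b) \<le> m) \<and>
         (X = 0 \<longleftrightarrow> m = k - k * (t + 1)^2 * a * (a + 1) / (((a + 1) * t + k)^2 + k * a * b))"
proof -
  define Den where "Den = ((a + 1) * t + k)^2 + k * a * b"
  define B where "B = k - k * (t + 1)^2 * a * (a + 1) / Den"
  define T where "T = t*t - k - a*t"
  define Aa where "Aa = b*k^3 + a*b*k*t*t + k*T^2 - b*t^4"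
  define Bb where "Bb = b*k^3 + b*k^2 + a*b*t*t + T^2 - 2*b*k*t*t"
  have kpos: "k > 0" using k a b by simp
  have h2': "b * k * e2 = T * e0"
    using h1 h2 unfolding T_def by algebra
  have Denpos: "Den > 0"
  proof -
    have "Den \<ge> 0" unfolding Den_def using a b kpos by simp
    moreover have "Den \<noteq> 0"
    proof
      assume "Den = 0"
      have "k * a * b \<ge> 0" using a b kpos by simp
      then have "((a + 1) * t + k)^2 = 0" "k * a * b = 0"
        using \<open>Den = 0\<close> unfolding Den_def by (smt (verit) zero_le_power2)+
      then have "a = 0" "(a + 1) * t + k = 0" using kpos b by auto
      then show False using tk by simp
    qed
    ultimately show ?thesis by simp
  qed
  have AaSOS: "Aa = a*b*(t-k)^2 + (T - b*k)^2 + a*(b*t - T)^2"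
    unfolding Aa_def T_def using polyA[OF k] by simp
  have Aapos: "Aa > 0"
  proof -
    have "Aa \<ge> 0" unfolding AaSOS using a b by simp
    moreover have "Aa \<noteq> 0"
    proof
      assume "Aa = 0"
      have nn: "a*b*(t-k)^2 \<ge> 0" "(T - b*k)^2 \<ge> 0" "a*(b*t - T)^2 \<ge> 0" using a b by simp_all
      then have z: "a*b*(t-k)^2 = 0" "(T - b*k)^2 = 0" "a*(b*t - T)^2 = 0"
        using \<open>Aa = 0\<close> unfolding AaSOS by linarith+
      show False
      proof (cases "a = 0")
        case True
        then have "T = b * k" using z by simp
        then have "t * t = k * k" unfolding T_def using True k by (simp add: algebra_simps)
        then have "(t - k) * (t + k) = 0" by (simp add: algebra_simps)
        then show False using tk by auto
      next
        case False
        then have "(t-k)^2 = 0" using z b a by simp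
        then show False using tk by simp
      qed
    qed
    ultimately show ?thesis by simp
  qed
  have PI: "Bb * Den = Aa * (Den - (t+1)^2*a*(a+1))"
    unfolding Bb_def Aa_def Den_def T_def using polyPI[OF k] by simp
  have kBb: "k * Bb = Aa * B"
  proof -
    have "B * Den = k * (Den - (t+1)^2*a*(a+1))" unfolding B_def using Denpos by (simp add: field_simps)
    then have "Aa * B * Den = k * Bb * Den" using PI by algebra
    then show ?thesis using Denpos by simp
  qed
  have Xn: "X * n^2 = (n*e0^2 - e0) * ((n*e0^2 - e0) + a * (n*e1^2 - e0) + b * (n*e2^2 - e0)) - k * (n*e1^2 - e0)^2"
    unfolding X using n by (simp add: field_simps power2_eq_square)
  have "X * n^2 * (b^2 * k^4) = b * k * e0^2 * m * (m * Aa - k * Bb)"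
    unfolding Xn Aa_def Bb_def T_def using polyX[OF k h1 h2'[unfolded T_def] m] .
  also have "\<dots> = (b * k * e0^2 * m * Aa) * (m - B)" using kBb by (simp add: algebra_simps)
  finally have eq: "X * (n^2 * (b^2 * k^4)) = (b * k * e0^2 * m * Aa) * (m - B)" by (simp add: algebra_simps)
  have p1: "n^2 * (b^2 * k^4) > 0" using n b kpos by simp
  have p2: "b * k * e0^2 * m * Aa > 0" using b kpos e0 Aapos m n by simp
  have "0 \<le> X \<longleftrightarrow> 0 \<le> m - B"
  proof -
    have "0 \<le> X \<longleftrightarrow> 0 \<le> X * (n^2 * (b^2 * k^4))" using p1 by (simp add: zero_le_mult_iff)
    also have "\<dots> \<longleftrightarrow> 0 \<le> m - B" unfolding eq
    proof -
      have gen: "\<And>P y::real. P > 0 \<Longrightarrow> (0 \<le> P * y \<longleftrightarrow> 0 \<le> y)" by (simp add: zero_le_mult_iff)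
      show "0 \<le> b * k * e0\<^sup>2 * m * Aa * (m - B) \<longleftrightarrow> 0 \<le> m - B" by (rule gen[OF p2])
    qed
    finally show ?thesis .
  qed
  moreover have "X = 0 \<longleftrightarrow> m = B"
  proof -
    have "X = 0 \<longleftrightarrow> X * (n^2 * (b^2 * k^4)) = 0" using n b kpos by simp
    also have "\<dots> \<longleftrightarrow> m = B" unfolding eq using b kpos e0 Aapos m n by simp
    finally show ?thesis .
  qed
  ultimately show ?thesis unfolding B_def Den_def by simp
qed


context psE begin

lemma kk_eq: "kk = 1 + aa + bb"
proof -
  obtain x y where xy: "(x,y) \<in> R 1" using R1_ne by blast
  have vJ: "val Jmat i = 1" for i by (simp add: val_def Jmat_def)
  have "(\<Sum>z\<in>Gam x. Jmat$y$z) = 1 + aa + bb" using nbr_sum[OF cc_J xy] vJ by simp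
  moreover have "(\<Sum>z\<in>Gam x. (Jmat::real^'x^'x)$y$z) = kk" using card_Gam by (simp add: Jmat_def)
  ultimately show ?thesis by simp
qed

lemma main_psE:
  assumes tk: "th \<noteq> kk" "th \<noteq> - kk"
  shows "let k = kk; a1 = aa; b1 = bb; m = real (rank E)
         in (m \<ge> k - k * (th + 1)^2 * a1 * (a1 + 1) / (((a1 + 1) * th + k)^2 + k * a1 * b1))
            \<and> (m = k - k * (th + 1)^2 * a1 * (a1 + 1) / (((a1 + 1) * th + k)^2 + k * a1 * b1)
               \<longleftrightarrow> light_tail d R E)"
proof -
  let ?n = "real CARD('x)"
  let ?m = "real (rank E)"
  define X where "X = (e0^2 - e0/?n) * ((e0^2 - e0/?n) + aa*(e1^2 - e0/?n) + bb*(e2^2 - e0/?n)) - kk*(e1^2 - e0/?n)^2"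
  have Xp: "X = p0 * (p0 + aa * p1 + bb * p2) - kk * p1^2" unfolding X_def p0_def p1_def p2_def ..
  have kpos: "kk > 0" using kk_eq by simp
  have bpos: "bb > 0" using b_pos by simp
  have SX: "S0 * S2 - S1^2 = (?n^2 * kk) * X"
    unfolding Xp S0_val S1_val S2_val by (simp add: algebra_simps power2_eq_square)
  have npos: "?n^2 * kk > 0" using kpos by simp
  have X0: "X \<ge> 0"
  proof -
    have "0 \<le> S0 * S2 - S1^2" using S_disc by simp
    then have "0 \<le> (?n^2 * kk) * X" using SX by simp
    then show ?thesis using npos by (simp add: zero_le_mult_iff)
  qed
  have alg: "(0 \<le> X \<longrightarrow> kk - kk * (th + 1)^2 * aa * (aa + 1) / (((aa + 1) * th + kk)^2 + kk * aa * bb) \<le> ?m) \<and>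
         (X = 0 \<longleftrightarrow> ?m = kk - kk * (th + 1)^2 * aa * (aa + 1) / (((aa + 1) * th + kk)^2 + kk * aa * bb))"
    by (rule final_alg[OF kk_eq _ bpos nn_pos e0_pos eq1 eq2 rankE tk X_def]) simp
  have eqX: "X = 0 \<longleftrightarrow> S1^2 = S0 * S2"
  proof -
    have "X = 0 \<longleftrightarrow> (?n^2 * kk) * X = 0" using kpos by simp
    also have "\<dots> \<longleftrightarrow> S1^2 = S0 * S2" using SX by auto
    finally show ?thesis .
  qed
  have LT: "light_tail d R E \<longleftrightarrow> X = 0"
  proof
    assume lt: "light_tail d R E"
    then obtain q where kr: "krein_expansion d R E E q"
      and F: "let F = (\<Sum>H\<in>{H. prim_idem d R H} - {(1 / ?n) *\<^sub>R Jmat}. q H *\<^sub>R H)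
              in F \<noteq> 0 \<and> (\<exists>eta::real. rel_mat R 1 ** F = eta *\<^sub>R F)"
      unfolding light_tail_def by blast
    from F obtain eta where "rel_mat R 1 ** (?n *\<^sub>R Pm) = eta *\<^sub>R (?n *\<^sub>R Pm)"
      unfolding KF[OF kr] Let_def by blast
    then have "?n *\<^sub>R (rel_mat R 1 ** Pm) = ?n *\<^sub>R (eta *\<^sub>R Pm)"
      by (simp add: mm_scale_right)
    then have "rel_mat R 1 ** Pm = eta *\<^sub>R Pm"
      using nn_pos scaleR_cancel_left by (metis less_irrefl)
    then have "S1^2 = S0 * S2" by (rule eq_from_eig)
    then show "X = 0" using eqX by simp
  next
    assume "X = 0"
    then have eq: "S1^2 = S0 * S2" using eqX by simp
    have mne1: "?m \<noteq> 1"
    proof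
      assume m1: "?m = 1"
      then have e0n: "e0 = 1 / ?n" using rankE by (simp add: field_simps)
      have "S0 = 0" unfolding S0_val p0_def e0n by (simp add: power2_eq_square)
      then have "S1 = 0" using eq by simp
      then have "p1 = 0" unfolding S1_val using kpos by simp
      then have "e1^2 = e0^2" unfolding p1_def e0n by (simp add: power2_eq_square)
      then have e12: "e1^2 = e0^2" .
      have "th^2 * e0^2 = (th * e0)^2" by (simp add: power_mult_distrib)
      also have "\<dots> = (kk * e1)^2" using eq1 by simp
      also have "\<dots> = kk^2 * e1^2" by (simp add: power_mult_distrib)
      also have "\<dots> = kk^2 * e0^2" using e12 by simp
      finally have "th^2 * e0^2 = kk^2 * e0^2" .
      then have "th^2 = kk^2" using e0_pos by simp
      then have "th = kk \<or> th = - kk" by (simp add: power2_eq_iff)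
      then show False using tk by blast
    qed
    have "rank E \<ge> 1" using rank_pos by simp
    moreover have "rank E \<noteq> 1" using mne1 by auto
    ultimately have "rank E \<ge> 2" by simp
    then have m2: "?m \<ge> 2" by simp
    have p0pos: "p0 > 0"
    proof -
      have "p0 = e0 * (?n * e0 - 1) / ?n" unfolding p0_def by (simp add: field_simps power2_eq_square)
      moreover have "?n * e0 - 1 > 0" using m2 rankE by simp
      ultimately show ?thesis using e0_pos by simp
    qed
    have S0p: "S0 > 0" unfolding S0_val using p0pos by simp
    define eta where "eta = S1 / S0"
    have APm: "rel_mat R 1 ** Pm = eta *\<^sub>R Pm" unfolding eta_def by (rule eig_from_eq[OF eq S0p])
    obtain q where kr: "krein_expansion d R E E q" using krein_exists by blast
    obtain x :: 'x where True by blast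
    have "Pm$x$x = p0" using val_at[OF Pm_cc, of 0 x x] val_Pm by (simp add: R0)
    then have Pm0: "Pm \<noteq> 0" using p0pos by auto
    have Fne: "?n *\<^sub>R Pm \<noteq> 0" using Pm0 by simp
    have FA: "rel_mat R 1 ** (?n *\<^sub>R Pm) = eta *\<^sub>R (?n *\<^sub>R Pm)"
      unfolding mm_scale_right APm by simp
    have pE: "prim_idem d R E" using primE prim_idem_iff by simp
    have KFq: "(\<Sum>H\<in>{H. prim_idem d R H} - {(1 / ?n) *\<^sub>R Jmat}. q H *\<^sub>R H) = ?n *\<^sub>R Pm"
      by (rule KF[OF kr])
    have "krein_expansion d R E E q \<and>
      (let F = (\<Sum>H\<in>{H. prim_idem d R H} - {(1 / ?n) *\<^sub>R Jmat}. q H *\<^sub>R H)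
       in F \<noteq> 0 \<and> (\<exists>eta::real. rel_mat R 1 ** F = eta *\<^sub>R F))"
      unfolding Let_def KFq using kr Fne FA by blast
    then show "light_tail d R E" unfolding light_tail_def using pE by blast
  qed
  show ?thesis unfolding Let_def using alg X0 LT by simp
qed

end

theorem theorem2p2:
  fixes d :: nat and R :: "nat \<Rightarrow> ('x::finite \<times> 'x) set"
    and E :: "real^'x^'x" and \<theta> :: real
  assumes "assoc_scheme d R"
    and "d \<ge> 2"
    and "t_partially_metric 2 R"
    and "intnum R 0 1 1 \<ge> 3"
    and "prim_idem d R E"
    and "rel_mat R 1 ** E = \<theta> *\<^sub>R E"
    and "\<theta> \<noteq> real (intnum R 0 1 1)" and "\<theta> \<noteq> - real (intnum R 0 1 1)"
  shows "let k = real (intnum R 0 1 1); a1 = real (intnum R 1 1 1);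
             b1 = real (intnum R 1 1 2); m = real (rank E)
         in (m \<ge> k - k * (\<theta> + 1)^2 * a1 * (a1 + 1) / (((a1 + 1) * \<theta> + k)^2 + k * a1 * b1))
            \<and> (m = k - k * (\<theta> + 1)^2 * a1 * (a1 + 1) / (((a1 + 1) * \<theta> + k)^2 + k * a1 * b1)
               \<longleftrightarrow> light_tail d R E)"
proof -
  interpret pms d R by unfold_locales (rule assms(1), rule assms(2), rule assms(3))
  have pE: "primc E" using assms(5) prim_idem_iff by simp
  interpret psE d R E \<theta> by unfold_locales (rule pE, rule assms(6))
  show ?thesis by (rule main_psE[OF assms(7) assms(8)])
qed

end
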